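(* Let $W=W(\Phi)$ be any finite Weyl group, let $u\in W$ be separable, and let $U=[e,u]_R=\{v\in W: v\leq_R u\}$. Then $(W/U,U)$ is a splitting of $W$; that is, the multiplication map $W/U\times U\to W$, $(x,y)\mapsto xy$, is a bijection and satisfies $\ell(xy)=\ell(x)+\ell(y)$ for all $x\in W/U$, $y\in U$.
   Context: $\Phi$ is a finite crystallographic root system with simple roots $\Delta$ and positive roots $\Phi^+$; $W=W(\Phi)$ is its Weyl group, generated by the simple reflections $s_\alpha$, $\alpha\in\Delta$. The length $\ell(w)$ is the minimal number of simple reflections in an expression for $w$. The inversion set is $I_\Phi(w)=\{\beta\in\Phi^+: w\beta\in-\Phi^+\}$, and $\ell(w)=|I_\Phi(w)|$. Left weak order: $v\leq_L w$ iff $I_\Phi(v)\subseteq I_\Phi(w)$ (equivalently $w=zv$ with $\ell(w)=\ell(z)+\ell(v)$); right weak order: $v\leq_R w$ iff $v^{-1}\leq_L w^{-1}$. The root poset on $\Phi^+$: $\beta\leq\beta'$ iff $\beta'-\beta$ is a nonnegative integer combination of simple roots. For $J\subseteq\Delta$, $\Phi_J$ is the set of roots in the span of $J$; more generally for a subsystem $\Phi'=\Phi\cap V$ ($V$ a linear subspace), $w|_{\Phi'}$ denotes the element $w'\in W(\Phi')$ with $I_{\Phi'}(w')=I_\Phi(w)\cap V$. An element $w\in W(\Phi)$ is separable if (S1) $\Phi$ is of type $A_1$; or (S2) $\Phi=\bigoplus_i\Phi_i$ is reducible and each $w|_{\Phi_i}$ is separable; or (S3) $\Phi$ is irreducible and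 there is $\alpha_i\in\Delta$ (a pivot) such that $w|_{\Phi_J}$ is separable for $J=\Delta\setminus\{\alpha_i\}$, and either $\{\beta\in\Phi^+:\beta\geq\alpha_i\}\subseteq I_\Phi(w)$ or $\{\beta\in\Phi^+:\beta\geq\alpha_i\}\cap I_\Phi(w)=\emptyset$. For $U\subseteq W$, the generalized quotient is $W/U=\{w\in W: \ell(wu)=\ell(w)+\ell(u)\ \forall u\in U\}$. A pair $(X,Y)$ of subsets of $W$ is a splitting of $W$ if the map $X\times Y\to W$, $(x,y)\mapsto xy$, is a bijection with $\ell(xy)=\ell(x)+\ell(y)$ for all $x\in X,y\in Y$. *)

theory Defs
  imports "HOL-Analysis.Analysis"
begin

definition refl :: "'a::euclidean_space \<Rightarrow> 'a \<Rightarrow> 'a" where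
  "refl \<alpha> x = x - (2 * (x \<bullet> \<alpha>) / (\<alpha> \<bullet> \<alpha>)) *\<^sub>R \<alpha>"

text \<open>Finite, reduced, crystallographic root system (not required to span the space).\<close>
definition root_system :: "'a::euclidean_space set \<Rightarrow> bool" where
  "root_system \<Phi> \<longleftrightarrow> finite \<Phi> \<and> 0 \<notin> \<Phi>
     \<and> (\<forall>\<alpha>\<in>\<Phi>. \<forall>\<beta>\<in>\<Phi>. refl \<alpha> \<beta> \<in> \<Phi>)
     \<and> (\<forall>\<alpha>\<in>\<Phi>. \<forall>\<beta>\<in>\<Phi>. 2 * (\<beta> \<bullet> \<alpha>) / (\<alpha> \<bullet> \<alpha>) \<in> \<int>)
     \<and> (\<forall>\<alpha>\<in>\<Phi>. \<forall>c::real. c *\<^sub>R \<alpha> \<in> \<Phi> \<longrightarrow> c = 1 \<or> c = -1)"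

definition nonneg_comb :: "'a::euclidean_space set \<Rightarrow> 'a \<Rightarrow> bool" where
  "nonneg_comb \<Delta> \<beta> \<longleftrightarrow> (\<exists>c::'a \<Rightarrow> nat. \<beta> = (\<Sum>\<alpha>\<in>\<Delta>. real (c \<alpha>) *\<^sub>R \<alpha>))"

definition simple_system :: "'a::euclidean_space set \<Rightarrow> 'a set \<Rightarrow> bool" where
  "simple_system \<Phi> \<Delta> \<longleftrightarrow> \<Delta> \<subseteq> \<Phi> \<and> independent \<Delta>
     \<and> (\<forall>\<beta>\<in>\<Phi>. nonneg_comb \<Delta> \<beta> \<or> nonneg_comb \<Delta> (- \<beta>))"

definition pos_roots :: "'a::euclidean_space set \<Rightarrow> 'a set \<Rightarrow> 'a set" where
  "pos_roots \<Phi> \<Delta> = {\<beta>\<in>\<Phi>. nonneg_comb \<Delta> \<beta>}"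

definition root_le :: "'a::euclidean_space set \<Rightarrow> 'a \<Rightarrow> 'a \<Rightarrow> bool" where
  "root_le \<Delta> \<alpha> \<beta> \<longleftrightarrow> nonneg_comb \<Delta> (\<beta> - \<alpha>)"

inductive_set weyl :: "'a::euclidean_space set \<Rightarrow> ('a \<Rightarrow> 'a) set" for \<Delta> where
  weyl_id: "id \<in> weyl \<Delta>"
| weyl_step: "\<alpha> \<in> \<Delta> \<Longrightarrow> w \<in> weyl \<Delta> \<Longrightarrow> refl \<alpha> \<circ> w \<in> weyl \<Delta>"

definition word_prod :: "'a::euclidean_space list \<Rightarrow> 'a \<Rightarrow> 'a" where
  "word_prod as = foldr (\<lambda>\<alpha> f. refl \<alpha> \<circ> f) as id"

definition len :: "'a::euclidean_space set \<Rightarrow> ('a \<Rightarrow> 'a) \<Rightarrow> nat" where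
  "len \<Delta> w = (LEAST n. \<exists>as. length as = n \<and> set as \<subseteq> \<Delta> \<and> w = word_prod as)"

definition inv_set :: "'a::euclidean_space set \<Rightarrow> 'a set \<Rightarrow> ('a \<Rightarrow> 'a) \<Rightarrow> 'a set" where
  "inv_set \<Phi> \<Delta> w = {\<beta>\<in>pos_roots \<Phi> \<Delta>. - (w \<beta>) \<in> pos_roots \<Phi> \<Delta>}"

definition left_le :: "'a::euclidean_space set \<Rightarrow> 'a set \<Rightarrow> ('a \<Rightarrow> 'a) \<Rightarrow> ('a \<Rightarrow> 'a) \<Rightarrow> bool" where
  "left_le \<Phi> \<Delta> v w \<longleftrightarrow> inv_set \<Phi> \<Delta> v \<subseteq> inv_set \<Phi> \<Delta> w"

definition right_le :: "'a::euclidean_space set \<Rightarrow> 'a set \<Rightarrow> ('a \<Rightarrow> 'a) \<Rightarrow> ('a \<Rightarrow> 'a) \<Rightarrow> bool" where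
  "right_le \<Phi> \<Delta> v w \<longleftrightarrow> left_le \<Phi> \<Delta> (inv v) (inv w)"

definition irreducible_rs :: "'a::euclidean_space set \<Rightarrow> bool" where
  "irreducible_rs \<Phi> \<longleftrightarrow> \<Phi> \<noteq> {} \<and>
     \<not> (\<exists>A B. A \<noteq> {} \<and> B \<noteq> {} \<and> A \<union> B = \<Phi> \<and> (\<forall>a\<in>A. \<forall>b\<in>B. a \<bullet> b = 0))"

definition reducible_rs :: "'a::euclidean_space set \<Rightarrow> bool" where
  "reducible_rs \<Phi> \<longleftrightarrow> \<Phi> \<noteq> {} \<and> \<not> irreducible_rs \<Phi>"

definition component :: "'a::euclidean_space set \<Rightarrow> 'a set \<Rightarrow> bool" where
  "component \<Phi> C \<longleftrightarrow> C \<subseteq> \<Phi> \<and> irreducible_rs C \<and> (\<forall>a\<in>C. \<forall>b\<in>\<Phi> - C. a \<bullet> b = 0)"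

text \<open>Separability of \<open>w\<close> depends only on \<open>(\<Phi>, \<Delta>, I(w))\<close>; \<open>sep \<Phi> \<Delta> N\<close> says that the
  element with inversion set \<open>N\<close> is separable. Restriction \<open>w|\<^sub>\<Phi>'\<close> to \<open>\<Phi>' = \<Phi> \<inter> V\<close>
  is the element whose inversion set is \<open>I(w) \<inter> V\<close> (w.r.t. the positive system \<open>\<Phi>\<^sup>+ \<inter> V\<close>).\<close>
inductive sep :: "'a::euclidean_space set \<Rightarrow> 'a set \<Rightarrow> 'a set \<Rightarrow> bool" where
  S1: "\<alpha> \<noteq> 0 \<Longrightarrow> \<Phi> = {\<alpha>, - \<alpha>} \<Longrightarrow> sep \<Phi> \<Delta> N"
| S2: "reducible_rs \<Phi> \<Longrightarrow>
       (\<And>C. component \<Phi> C \<Longrightarrow>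
          (\<exists>\<Delta>'. simple_system (\<Phi> \<inter> span C) \<Delta>'
               \<and> pos_roots (\<Phi> \<inter> span C) \<Delta>' = pos_roots \<Phi> \<Delta> \<inter> span C
               \<and> sep (\<Phi> \<inter> span C) \<Delta>' (N \<inter> span C))) \<Longrightarrow>
       sep \<Phi> \<Delta> N"
| S3: "irreducible_rs \<Phi> \<Longrightarrow> \<alpha> \<in> \<Delta> \<Longrightarrow>
       sep (\<Phi> \<inter> span (\<Delta> - {\<alpha>})) (\<Delta> - {\<alpha>}) (N \<inter> span (\<Delta> - {\<alpha>})) \<Longrightarrow>
       ({\<beta>\<in>pos_roots \<Phi> \<Delta>. root_le \<Delta> \<alpha> \<beta>} \<subseteq> N
        \<or> {\<beta>\<in>pos_roots \<Phi> \<Delta>. root_le \<Delta> \<alpha> \<beta>} \<inter> N = {}) \<Longrightarrow>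
       sep \<Phi> \<Delta> N"

definition separable :: "'a::euclidean_space set \<Rightarrow> 'a set \<Rightarrow> ('a \<Rightarrow> 'a) \<Rightarrow> bool" where
  "separable \<Phi> \<Delta> w \<longleftrightarrow> sep \<Phi> \<Delta> (inv_set \<Phi> \<Delta> w)"

definition gen_quot :: "'a::euclidean_space set \<Rightarrow> ('a \<Rightarrow> 'a) set \<Rightarrow> ('a \<Rightarrow> 'a) set" where
  "gen_quot \<Delta> U = {w\<in>weyl \<Delta>. \<forall>u\<in>U. len \<Delta> (w \<circ> u) = len \<Delta> w + len \<Delta> u}"

definition splitting :: "'a::euclidean_space set \<Rightarrow> ('a \<Rightarrow> 'a) set \<Rightarrow> ('a \<Rightarrow> 'a) set \<Rightarrow> bool" where
  "splitting \<Delta> X Y \<longleftrightarrow> bij_betw (\<lambda>(x, y). x \<circ> y) (X \<times> Y) (weyl \<Delta>)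
     \<and> (\<forall>x\<in>X. \<forall>y\<in>Y. len \<Delta> (x \<circ> y) = len \<Delta> x + len \<Delta> y)"

end

theory Submission
  imports Defs
begin

lemma refl_add: "refl a (x + y) = refl a x + refl a y"
  by (simp add: refl_def inner_add_left add_divide_distrib scaleR_add_left algebra_simps)

lemma refl_scale: "refl a (c *\<^sub>R x) = c *\<^sub>R refl a x"
  by (simp add: refl_def algebra_simps)

lemma linear_refl: "linear (refl a)"
  by (rule linearI) (simp_all add: refl_add refl_scale)

lemma refl_neg: "refl a (- x) = - refl a x"
  using refl_scale[of a "-1" x] by simp

lemma refl_self: "a \<noteq> 0 \<Longrightarrow> refl a a = - a"
  by (simp add: refl_def algebra_simps) (simp add: scaleR_2)

lemma refl_inner_self: "a \<noteq> 0 \<Longrightarrow> refl a x \<bullet> a = - (x \<bullet> a)"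
  by (simp add: refl_def inner_diff_left)

lemma refl_refl: "a \<noteq> 0 \<Longrightarrow> refl a (refl a x) = x"
  apply (subst refl_def[of a "refl a x"])
  apply (simp add: refl_inner_self)
  apply (simp add: refl_def)
  done

lemma refl_comp_refl: "a \<noteq> 0 \<Longrightarrow> refl a \<circ> refl a = id"
  by (auto simp: refl_refl)

lemma refl_inner: "a \<noteq> 0 \<Longrightarrow> refl a x \<bullet> refl a y = x \<bullet> y"
  by (simp add: refl_def inner_diff_left inner_diff_right inner_commute[of a y])

lemma refl_orth: "x \<bullet> a = 0 \<Longrightarrow> refl a x = x"
  by (simp add: refl_def)

lemma refl_conj:
  assumes "linear f" "\<And>x y. f x \<bullet> f y = x \<bullet> y"
  shows "f (refl a x) = refl (f a) (f x)"
  using assms by (simp add: refl_def linear_diff linear_scale)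

lemma refl_commute: "a \<bullet> b = 0 \<Longrightarrow> refl a (refl b x) = refl b (refl a x)"
  by (simp add: refl_def inner_diff_left inner_commute[of b a] algebra_simps)

lemma word_prod_Nil[simp]: "word_prod [] = id"
  by (simp add: word_prod_def)

lemma word_prod_Cons[simp]: "word_prod (a # as) = refl a \<circ> word_prod as"
  by (simp add: word_prod_def)

lemma word_prod_append: "word_prod (xs @ ys) = word_prod xs \<circ> word_prod ys"
  by (induction xs) (auto simp: o_assoc)

lemma word_prod_snoc: "word_prod (xs @ [a]) = word_prod xs \<circ> refl a"
  by (simp add: word_prod_append)

lemma weyl_word: "w \<in> weyl D \<longleftrightarrow> (\<exists>as. set as \<subseteq> D \<and> w = word_prod as)"
proof
  assume "w \<in> weyl D" then show "\<exists>as. set as \<subseteq> D \<and> w = word_prod as"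
  proof induction
    case weyl_id then show ?case by (intro exI[of _ "[]"]) auto
  next
    case (weyl_step a w)
    then obtain as where "set as \<subseteq> D" "w = word_prod as" by auto
    with weyl_step show ?case by (intro exI[of _ "a # as"]) auto
  qed
next
  assume "\<exists>as. set as \<subseteq> D \<and> w = word_prod as"
  then obtain as where "set as \<subseteq> D" "w = word_prod as" by auto
  then show "w \<in> weyl D"
    by (induction as arbitrary: w) (auto intro: weyl.intros)
qed

lemma word_in_weyl: "set as \<subseteq> D \<Longrightarrow> word_prod as \<in> weyl D"
  using weyl_word by blast

lemma weyl_comp: "v \<in> weyl D \<Longrightarrow> w \<in> weyl D \<Longrightarrow> v \<circ> w \<in> weyl D"
  unfolding weyl_word by (metis set_append sup.boundedI word_prod_append)

lemma weyl_refl: "a \<in> D \<Longrightarrow> refl a \<in> weyl D"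
  using weyl_step[OF _ weyl_id, of a D] by simp

lemma weyl_mono: "D \<subseteq> D' \<Longrightarrow> weyl D \<subseteq> weyl D'"
  by (auto simp: weyl_word) blast

lemma word_prod_rev:
  assumes "0 \<notin> set as"
  shows "word_prod as \<circ> word_prod (rev as) = id \<and> word_prod (rev as) \<circ> word_prod as = id"
  using assms
proof (induction as)
  case (Cons a as)
  have a: "a \<noteq> 0" using Cons.prems by auto
  have IH0: "word_prod as \<circ> word_prod (rev as) = id \<and> word_prod (rev as) \<circ> word_prod as = id"
    by (rule Cons.IH) (use Cons.prems in auto)
  note IH = conjunct1[OF IH0] conjunct2[OF IH0]
  have "word_prod (a # as) \<circ> word_prod (rev (a # as)) = refl a \<circ> (word_prod as \<circ> word_prod (rev as)) \<circ> refl a"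
    by (simp add: word_prod_append o_assoc)
  also have "\<dots> = id" using IH a by (simp add: refl_comp_refl)
  finally have 1: "word_prod (a # as) \<circ> word_prod (rev (a # as)) = id" .
  have "word_prod (rev (a # as)) \<circ> word_prod (a # as) = word_prod (rev as) \<circ> (refl a \<circ> refl a) \<circ> word_prod as"
    by (simp add: word_prod_append o_assoc)
  also have "\<dots> = id" using IH a by (simp add: refl_comp_refl)
  finally show ?case using 1 by (simp only:)
qed auto

lemma word_prod_linear: "linear (word_prod as)"
proof (induction as)
  case Nil then show ?case by (simp add: linear_ident)
next
  case (Cons a as) then show ?case
    using linear_compose[OF Cons.IH linear_refl[of a]] by (simp add: o_def)
qed

lemma word_prod_inner: "0 \<notin> set as \<Longrightarrow> word_prod as x \<bullet> word_prod as y = x \<bullet> y"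
  by (induction as arbitrary: x y) (auto simp: refl_inner)

context
  fixes D :: "'a::euclidean_space set"
  assumes D0: "0 \<notin> D"
begin

lemma weyl_linear: "w \<in> weyl D \<Longrightarrow> linear w"
  by (auto simp: weyl_word word_prod_linear)

lemma weyl_inner: "w \<in> weyl D \<Longrightarrow> w x \<bullet> w y = x \<bullet> y"
proof -
  assume "w \<in> weyl D"
  then obtain as where "set as \<subseteq> D" "w = word_prod as" by (auto simp: weyl_word)
  moreover then have "0 \<notin> set as" using D0 by auto
  ultimately show ?thesis by (simp add: word_prod_inner)
qed

lemma weyl_inv: "w \<in> weyl D \<Longrightarrow> inv w \<in> weyl D \<and> w \<circ> inv w = id \<and> inv w \<circ> w = id"
proof -
  assume "w \<in> weyl D"
  then obtain as where as: "set as \<subseteq> D" "w = word_prod as" by (auto simp: weyl_word)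
  have 0: "0 \<notin> set as" using as D0 by auto
  have "inv w = word_prod (rev as)"
    using word_prod_rev[OF 0] as by (auto intro: inv_unique_comp)
  then show ?thesis using word_prod_rev[OF 0] as word_in_weyl[of "rev as" D] by auto
qed

lemma weyl_bij: "w \<in> weyl D \<Longrightarrow> bij w"
  using weyl_inv by (metis o_bij)

lemma weyl_inv_apply: "w \<in> weyl D \<Longrightarrow> inv w (w x) = x" "w \<in> weyl D \<Longrightarrow> w (inv w x) = x"
  using weyl_inv by (metis comp_apply id_apply)+

lemma weyl_inj: "w \<in> weyl D \<Longrightarrow> w x = w y \<longleftrightarrow> x = y"
  by (metis weyl_inv_apply(1))

lemma weyl_neg: "w \<in> weyl D \<Longrightarrow> w (- x) = - w x"
  using weyl_linear linear_neg by blast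

lemma weyl_inv_comp: "v \<in> weyl D \<Longrightarrow> w \<in> weyl D \<Longrightarrow> inv (v \<circ> w) = inv w \<circ> inv v"
  by (meson o_inv_distrib weyl_bij)

lemma weyl_inv_inv: "w \<in> weyl D \<Longrightarrow> inv (inv w) = w"
  by (meson inv_inv_eq weyl_bij)

end

lemma coef_sum:
  fixes D :: "'a::euclidean_space set"
  assumes fin: "finite D" and ind: "independent D" and b: "\<beta> = (\<Sum>d\<in>D. f d *\<^sub>R d)" and d: "d \<in> D"
  shows "representation D \<beta> d = f d"
proof -
  have sp: "\<beta> \<in> span D" unfolding b by (intro span_sum span_scale span_base)
  have "representation D \<beta> = (\<lambda>b. if b \<in> D then f b else 0)"
  proof (rule representation_eqI[OF ind sp])
    show "finite {b. (if b \<in> D then f b else 0) \<noteq> 0}"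
      by (rule finite_subset[OF _ fin]) auto
    show "(\<Sum>b | (if b \<in> D then f b else 0) \<noteq> 0. (if b \<in> D then f b else 0) *\<^sub>R b) = \<beta>"
      unfolding b by (rule sum.mono_neutral_cong_left[OF fin]) auto
  qed (auto split: if_splits)
  then show ?thesis using d by simp
qed

locale rs =
  fixes \<Phi> :: "'a::euclidean_space set" and \<Delta> :: "'a set"
  assumes RS: "root_system \<Phi>" and SS: "simple_system \<Phi> \<Delta>"
begin

abbreviation "P \<equiv> pos_roots \<Phi> \<Delta>"
abbreviation "W \<equiv> weyl \<Delta>"
abbreviation "I \<equiv> inv_set \<Phi> \<Delta>"
abbreviation "N w \<equiv> inv_set \<Phi> \<Delta> (inv w)"
abbreviation "cf \<equiv> representation \<Delta>"

lemma fin_Phi: "finite \<Phi>" using RS unfolding root_system_def by (elim conjE)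
lemma zero_Phi: "0 \<notin> \<Phi>" using RS unfolding root_system_def by (elim conjE)
lemma refl_Phi: "\<alpha> \<in> \<Phi> \<Longrightarrow> \<beta> \<in> \<Phi> \<Longrightarrow> refl \<alpha> \<beta> \<in> \<Phi>"
  using RS unfolding root_system_def by (elim conjE) blast
lemma reduced: "\<alpha> \<in> \<Phi> \<Longrightarrow> c *\<^sub>R \<alpha> \<in> \<Phi> \<Longrightarrow> c = 1 \<or> c = -1"
  using RS unfolding root_system_def by (elim conjE) blast

lemma Delta_sub: "\<Delta> \<subseteq> \<Phi>" using SS unfolding simple_system_def by (elim conjE)
lemma ind: "independent \<Delta>" using SS unfolding simple_system_def by (elim conjE)
lemma comb: "\<beta> \<in> \<Phi> \<Longrightarrow> nonneg_comb \<Delta> \<beta> \<or> nonneg_comb \<Delta> (- \<beta>)"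
  using SS unfolding simple_system_def by (elim conjE) blast

lemma fin_Delta: "finite \<Delta>" using Delta_sub fin_Phi finite_subset by blast
lemma zero_Delta: "0 \<notin> \<Delta>" using Delta_sub zero_Phi by blast

lemma neg_Phi: "\<beta> \<in> \<Phi> \<Longrightarrow> - \<beta> \<in> \<Phi>"
proof -
  assume b: "\<beta> \<in> \<Phi>"
  then have b0: "\<beta> \<noteq> 0" using zero_Phi by auto
  show ?thesis using refl_Phi[OF b b] unfolding refl_self[OF b0] .
qed

lemma nonneg_comb_span: "nonneg_comb \<Delta> \<beta> \<Longrightarrow> \<beta> \<in> span \<Delta>"
  unfolding nonneg_comb_def by (auto intro!: span_sum intro: span_scale span_base)

lemma nonneg_comb_cf: "nonneg_comb \<Delta> \<beta> \<Longrightarrow> \<delta> \<in> \<Delta> \<Longrightarrow> cf \<beta> \<delta> \<ge> 0"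
  unfolding nonneg_comb_def using coef_sum[OF fin_Delta ind] by fastforce

lemma Phi_span: "\<beta> \<in> \<Phi> \<Longrightarrow> \<beta> \<in> span \<Delta>"
  using comb nonneg_comb_span span_neg by fastforce

lemma span_expand: "\<beta> \<in> span \<Delta> \<Longrightarrow> \<beta> = (\<Sum>\<delta>\<in>\<Delta>. cf \<beta> \<delta> *\<^sub>R \<delta>)"
  using sum_representation_eq[OF ind _ fin_Delta] by simp

lemma cf_zero_all: "\<beta> \<in> span \<Delta> \<Longrightarrow> (\<And>\<delta>. \<delta> \<in> \<Delta> \<Longrightarrow> cf \<beta> \<delta> = 0) \<Longrightarrow> \<beta> = 0"
  using span_expand by (metis (no_types, lifting) scale_zero_left sum.neutral)

lemma cf_neg: "\<beta> \<in> span \<Delta> \<Longrightarrow> cf (- \<beta>) \<delta> = - cf \<beta> \<delta>"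
  using representation_neg[OF ind] by simp

lemma cf_add: "\<beta> \<in> span \<Delta> \<Longrightarrow> \<gamma> \<in> span \<Delta> \<Longrightarrow> cf (\<beta> + \<gamma>) \<delta> = cf \<beta> \<delta> + cf \<gamma> \<delta>"
  using representation_add[OF ind] by simp

lemma cf_diff: "\<beta> \<in> span \<Delta> \<Longrightarrow> \<gamma> \<in> span \<Delta> \<Longrightarrow> cf (\<beta> - \<gamma>) \<delta> = cf \<beta> \<delta> - cf \<gamma> \<delta>"
  using representation_diff[OF ind] by simp

lemma cf_scale: "\<beta> \<in> span \<Delta> \<Longrightarrow> cf (c *\<^sub>R \<beta>) \<delta> = c * cf \<beta> \<delta>"
  using representation_scale[OF ind] by simp

lemma cf_basis: "\<alpha> \<in> \<Delta> \<Longrightarrow> cf \<alpha> \<delta> = (if \<delta> = \<alpha> then 1 else 0)"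
  using representation_basis[OF ind] by simp

lemma pos_sub: "P \<subseteq> \<Phi>" by (auto simp: pos_roots_def)
lemma fin_P: "finite P" using pos_sub fin_Phi finite_subset by blast

lemma posD: "\<beta> \<in> P \<Longrightarrow> \<delta> \<in> \<Delta> \<Longrightarrow> cf \<beta> \<delta> \<ge> 0"
  by (auto simp: pos_roots_def nonneg_comb_cf)

lemma posI: assumes "\<beta> \<in> \<Phi>" "\<And>\<delta>. \<delta> \<in> \<Delta> \<Longrightarrow> cf \<beta> \<delta> \<ge> 0" shows "\<beta> \<in> P"
proof (rule ccontr)
  assume "\<beta> \<notin> P"
  then have "nonneg_comb \<Delta> (- \<beta>)" using comb assms(1) by (auto simp: pos_roots_def)
  then have "cf (- \<beta>) \<delta> \<ge> 0" if "\<delta> \<in> \<Delta>" for \<delta> using nonneg_comb_cf that by blast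
  then have "cf \<beta> \<delta> = 0" if "\<delta> \<in> \<Delta>" for \<delta>
    using assms(2)[OF that] that cf_neg[OF Phi_span[OF assms(1)]] by fastforce
  then have "\<beta> = 0" using cf_zero_all Phi_span assms(1) by blast
  then show False using assms(1) zero_Phi by simp
qed

lemma root_cases: "\<beta> \<in> \<Phi> \<Longrightarrow> \<beta> \<in> P \<or> - \<beta> \<in> P"
  using comb neg_Phi by (auto simp: pos_roots_def)

lemma not_both: assumes "\<beta> \<in> P" shows "- \<beta> \<notin> P"
proof
  assume n: "- \<beta> \<in> P"
  have b: "\<beta> \<in> \<Phi>" using assms pos_sub by auto
  have "cf \<beta> \<delta> = 0" if "\<delta> \<in> \<Delta>" for \<delta>
    using posD[OF assms that] posD[OF n that] cf_neg[OF Phi_span[OF b]] by fastforce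
  then have "\<beta> = 0" using cf_zero_all Phi_span b by blast
  then show False using b zero_Phi by simp
qed

lemma simple_pos: "\<alpha> \<in> \<Delta> \<Longrightarrow> \<alpha> \<in> P"
  using Delta_sub by (intro posI) (auto simp: cf_basis)

lemma refl_simple_pos:
  assumes a: "\<alpha> \<in> \<Delta>" and b: "\<beta> \<in> P" and ne: "\<beta> \<noteq> \<alpha>"
  shows "refl \<alpha> \<beta> \<in> P"
proof -
  have bPhi: "\<beta> \<in> \<Phi>" using b pos_sub by auto
  have aPhi: "\<alpha> \<in> \<Phi>" using a Delta_sub by auto
  have bs: "\<beta> \<in> span \<Delta>" using Phi_span bPhi by auto
  have as: "\<alpha> \<in> span \<Delta>" using a by (simp add: span_base)
  have "\<exists>\<delta>\<in>\<Delta>. \<delta> \<noteq> \<alpha> \<and> cf \<beta> \<delta> > 0"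
  proof (rule ccontr)
    assume "\<not> ?thesis"
    then have z: "cf \<beta> \<delta> = 0" if "\<delta> \<in> \<Delta>" "\<delta> \<noteq> \<alpha>" for \<delta>
      using posD[OF b] that by force
    have "\<beta> = (\<Sum>\<delta>\<in>\<Delta>. cf \<beta> \<delta> *\<^sub>R \<delta>)" by (rule span_expand[OF bs])
    also have "\<dots> = cf \<beta> \<alpha> *\<^sub>R \<alpha>"
      by (rule sum.remove[OF fin_Delta a, THEN trans]) (simp add: z)
    finally have eq: "\<beta> = cf \<beta> \<alpha> *\<^sub>R \<alpha>" .
    then have "cf \<beta> \<alpha> = 1 \<or> cf \<beta> \<alpha> = -1" using reduced[OF aPhi] bPhi by metis
    moreover have "cf \<beta> \<alpha> \<ge> 0" using posD[OF b a] .
    ultimately have "\<beta> = \<alpha>" using eq by auto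
    with ne show False by simp
  qed
  then obtain \<delta> where d: "\<delta> \<in> \<Delta>" "\<delta> \<noteq> \<alpha>" "cf \<beta> \<delta> > 0" by blast
  have rPhi: "refl \<alpha> \<beta> \<in> \<Phi>" using refl_Phi[OF aPhi bPhi] .
  have "cf (refl \<alpha> \<beta>) \<delta> = cf \<beta> \<delta>"
    unfolding refl_def using d by (simp add: cf_diff[OF bs span_scale[OF as]] cf_scale[OF as] cf_basis[OF a])
  then have "cf (refl \<alpha> \<beta>) \<delta> > 0" using d by simp
  moreover have "- refl \<alpha> \<beta> \<notin> P"
  proof
    assume "- refl \<alpha> \<beta> \<in> P"
    then have "cf (- refl \<alpha> \<beta>) \<delta> \<ge> 0" using posD d by blast
    then show False using \<open>cf (refl \<alpha> \<beta>) \<delta> > 0\<close> cf_neg[OF Phi_span[OF rPhi]] by simp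
  qed
  ultimately show ?thesis using root_cases[OF rPhi] by blast
qed

lemma weyl_Phi: "w \<in> W \<Longrightarrow> \<beta> \<in> \<Phi> \<Longrightarrow> w \<beta> \<in> \<Phi>"
proof (induction arbitrary: \<beta> rule: weyl.induct)
  case (weyl_step \<alpha> w) then show ?case using refl_Phi Delta_sub by auto
qed simp

lemmas W_linear = weyl_linear[OF zero_Delta]
lemmas W_inner = weyl_inner[OF zero_Delta]
lemmas W_inv = weyl_inv[OF zero_Delta]
lemmas W_inv_apply = weyl_inv_apply[OF zero_Delta]
lemmas W_inj = weyl_inj[OF zero_Delta]
lemmas W_neg = weyl_neg[OF zero_Delta]
lemmas W_inv_comp = weyl_inv_comp[OF zero_Delta]
lemmas W_inv_inv = weyl_inv_inv[OF zero_Delta]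

lemma W_inv_in: "w \<in> W \<Longrightarrow> inv w \<in> W" using W_inv by blast

lemma I_sub: "I w \<subseteq> P" by (auto simp: inv_set_def)
lemma fin_I: "finite (I w)" using I_sub fin_P finite_subset by blast

lemma I_iff: "\<beta> \<in> I w \<longleftrightarrow> \<beta> \<in> P \<and> - w \<beta> \<in> P" by (simp add: inv_set_def)

lemma W_pos_cases: "w \<in> W \<Longrightarrow> \<beta> \<in> P \<Longrightarrow> w \<beta> \<in> P \<or> - w \<beta> \<in> P"
  using root_cases weyl_Phi pos_sub by blast

lemma card_I_snoc:
  assumes w: "w \<in> W" and a: "\<alpha> \<in> \<Delta>"
  shows "w \<alpha> \<in> P \<Longrightarrow> card (I (w \<circ> refl \<alpha>)) = Suc (card (I w))"
    and "- w \<alpha> \<in> P \<Longrightarrow> card (I (w \<circ> refl \<alpha>)) + 1 = card (I w)"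
proof -
  let ?s = "refl \<alpha>"
  have a0: "\<alpha> \<noteq> 0" using a zero_Delta by auto
  have aP: "\<alpha> \<in> P" using simple_pos a by auto
  have nA: "- \<alpha> \<notin> P" using not_both aP by auto
  have key: "I (w \<circ> ?s) - {\<alpha>} = ?s ` (I w - {\<alpha>})"
  proof (intro equalityI subsetI)
    fix \<beta> assume "\<beta> \<in> I (w \<circ> ?s) - {\<alpha>}"
    then have b: "\<beta> \<in> P" "\<beta> \<noteq> \<alpha>" "- w (?s \<beta>) \<in> P" by (auto simp: I_iff)
    have sb: "?s \<beta> \<in> P" using refl_simple_pos[OF a b(1,2)] .
    have "?s \<beta> \<noteq> \<alpha>"
    proof
      assume "?s \<beta> = \<alpha>"
      then have "\<beta> = ?s \<alpha>" using refl_refl[OF a0, of \<beta>] by simp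
      then show False using b(1) nA refl_self[OF a0] by simp
    qed
    then have "?s \<beta> \<in> I w - {\<alpha>}" using sb b by (auto simp: I_iff)
    then show "\<beta> \<in> ?s ` (I w - {\<alpha>})" using refl_refl[OF a0, of \<beta>] by (metis image_eqI)
  next
    fix \<beta> assume "\<beta> \<in> ?s ` (I w - {\<alpha>})"
    then obtain \<gamma> where g0: "\<gamma> \<in> I w - {\<alpha>}" "\<beta> = ?s \<gamma>" by blast
    then have g: "\<gamma> \<in> P" "\<gamma> \<noteq> \<alpha>" "- w \<gamma> \<in> P" "\<beta> = ?s \<gamma>" by (auto simp: I_iff)
    have "\<beta> \<in> P" using refl_simple_pos[OF a g(1,2)] g by simp
    moreover have "\<beta> \<noteq> \<alpha>"
    proof
      assume "\<beta> = \<alpha>"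
      then have "\<gamma> = ?s \<alpha>" using refl_refl[OF a0, of \<gamma>] g(4) by simp
      then show False using g(1) nA refl_self[OF a0] by simp
    qed
    moreover have "- (w \<circ> ?s) \<beta> \<in> P" using g refl_refl[OF a0] by simp
    ultimately show "\<beta> \<in> I (w \<circ> ?s) - {\<alpha>}" by (auto simp: I_iff)
  qed
  have inj: "inj_on ?s X" for X
  proof (rule inj_onI)
    fix x y assume "?s x = ?s y"
    then have "?s (?s x) = ?s (?s y)" by simp
    then show "x = y" by (simp add: refl_refl[OF a0])
  qed
  have c1: "card (I (w \<circ> ?s) - {\<alpha>}) = card (I w - {\<alpha>})"
    unfolding key by (rule card_image[OF inj])
  have in1: "\<alpha> \<in> I (w \<circ> ?s) \<longleftrightarrow> w \<alpha> \<in> P"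
    using aP by (simp add: I_iff refl_self[OF a0] W_neg[OF w])
  have in2: "\<alpha> \<in> I w \<longleftrightarrow> - w \<alpha> \<in> P"
    using aP by (simp add: I_iff)
  show "w \<alpha> \<in> P \<Longrightarrow> card (I (w \<circ> refl \<alpha>)) = Suc (card (I w))"
  proof -
    assume h: "w \<alpha> \<in> P"
    then have x1: "\<alpha> \<in> I (w \<circ> ?s)" and x2: "\<alpha> \<notin> I w" using in1 in2 not_both by auto
    have "card (I (w \<circ> ?s)) = Suc (card (I (w \<circ> ?s) - {\<alpha>}))" by (rule card.remove[OF fin_I x1])
    also have "\<dots> = Suc (card (I w))" using c1 x2 by simp
    finally show ?thesis .
  qed
  show "- w \<alpha> \<in> P \<Longrightarrow> card (I (w \<circ> refl \<alpha>)) + 1 = card (I w)"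
  proof -
    assume h: "- w \<alpha> \<in> P"
    then have x1: "\<alpha> \<notin> I (w \<circ> ?s)" and x2: "\<alpha> \<in> I w" using in1 in2 not_both by auto
    have "card (I w) = Suc (card (I w - {\<alpha>}))" by (rule card.remove[OF fin_I x2])
    also have "\<dots> = Suc (card (I (w \<circ> ?s)))" using c1 x1 by simp
    finally show ?thesis by simp
  qed
qed

end

context rs
begin

lemma word_W: "set xs \<subseteq> \<Delta> \<Longrightarrow> word_prod xs \<in> W" by (rule word_in_weyl)

lemma deletion:
  assumes "set xs \<subseteq> \<Delta>" "\<delta> \<in> \<Delta>" "- word_prod xs \<delta> \<in> P"
  shows "\<exists>ys. set ys \<subseteq> \<Delta> \<and> Suc (length ys) = length xs \<and> word_prod xs \<circ> refl \<delta> = word_prod ys"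
  using assms
proof (induction xs)
  case Nil
  then show ?case using simple_pos not_both by auto
next
  case (Cons a xs)
  let ?g = "word_prod xs \<delta>"
  have a: "a \<in> \<Delta>" and xs: "set xs \<subseteq> \<Delta>" using Cons.prems by auto
  have a0: "a \<noteq> 0" using a zero_Delta by auto
  have gPhi: "?g \<in> \<Phi>" using weyl_Phi[OF word_W[OF xs]] Cons.prems(2) Delta_sub by auto
  show ?case
  proof (cases "?g \<in> P")
    case False
    then have "- ?g \<in> P" using root_cases gPhi by auto
    then obtain ys where ys: "set ys \<subseteq> \<Delta>" "Suc (length ys) = length xs" "word_prod xs \<circ> refl \<delta> = word_prod ys"
      using Cons.IH xs Cons.prems(2) by blast
    have "word_prod (a # xs) \<circ> refl \<delta> = refl a \<circ> (word_prod xs \<circ> refl \<delta>)"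
      by (simp only: word_prod_Cons comp_assoc)
    also have "\<dots> = word_prod (a # ys)" by (simp only: ys(3) word_prod_Cons)
    finally have e: "word_prod (a # xs) \<circ> refl \<delta> = word_prod (a # ys)" .
    have "set (a # ys) \<subseteq> \<Delta>" "Suc (length (a # ys)) = length (a # xs)" using ys a by auto
    then show ?thesis using e by blast
  next
    case True
    have "- refl a ?g \<in> P" using Cons.prems(3) by simp
    then have "?g = a" using refl_simple_pos[OF a True] not_both by blast
    have xs0: "0 \<notin> set xs" using xs zero_Delta by auto
    have conj: "word_prod xs \<circ> refl \<delta> = refl ?g \<circ> word_prod xs"
      by (rule ext) (simp add: refl_conj[OF word_prod_linear word_prod_inner[OF xs0]])
    have "word_prod (a # xs) \<circ> refl \<delta> = refl a \<circ> (word_prod xs \<circ> refl \<delta>)"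
      by (simp only: word_prod_Cons comp_assoc)
    also have "\<dots> = refl a \<circ> (refl a \<circ> word_prod xs)" using conj \<open>?g = a\<close> by simp
    also have "\<dots> = (refl a \<circ> refl a) \<circ> word_prod xs" by (simp only: comp_assoc)
    also have "\<dots> = word_prod xs" by (simp add: refl_comp_refl[OF a0])
    finally have e: "word_prod (a # xs) \<circ> refl \<delta> = word_prod xs" .
    have "Suc (length xs) = length (a # xs)" by simp
    then show ?thesis using e xs by blast
  qed
qed

lemma I_id: "I id = {}"
  using not_both by (auto simp: I_iff)

lemma I_id': "I (\<lambda>x. x) = {}"
  using not_both by (auto simp: I_iff)

lemma reduce_word:
  assumes "set xs \<subseteq> \<Delta>"
  shows "\<exists>ys. set ys \<subseteq> \<Delta> \<and> word_prod ys = word_prod xs \<and> length ys = card (I (word_prod xs))"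
  using assms
proof (induction xs rule: rev_induct)
  case Nil
  show ?case by (rule exI[of _ "[]"]) (simp add: I_id I_id')
next
  case (snoc a xs)
  have a: "a \<in> \<Delta>" and xs: "set xs \<subseteq> \<Delta>" using snoc.prems by auto
  let ?w = "word_prod xs"
  have w: "?w \<in> W" using word_W[OF xs] .
  obtain ys where ys: "set ys \<subseteq> \<Delta>" "word_prod ys = ?w" "length ys = card (I ?w)"
    using snoc.IH xs by blast
  have ws: "word_prod (xs @ [a]) = ?w \<circ> refl a" by (rule word_prod_snoc)
  show ?case
  proof (cases "?w a \<in> P")
    case True
    have e: "word_prod (ys @ [a]) = word_prod (xs @ [a])" unfolding ws word_prod_snoc ys(2) ..
    have l: "length (ys @ [a]) = card (I (word_prod (xs @ [a])))"
      unfolding ws using ys(3) card_I_snoc(1)[OF w a True] by simp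
    show ?thesis using e l ys(1) a by (intro exI[of _ "ys @ [a]"]) simp
  next
    case False
    then have n: "- ?w a \<in> P" using W_pos_cases[OF w simple_pos[OF a]] by auto
    obtain zs where zs: "set zs \<subseteq> \<Delta>" "Suc (length zs) = length ys" "word_prod ys \<circ> refl a = word_prod zs"
      using deletion[OF ys(1) a] n ys(2) by auto
    have e: "word_prod zs = word_prod (xs @ [a])" unfolding ws using zs(3) ys(2) by simp
    have l: "length zs = card (I (word_prod (xs @ [a])))"
      unfolding ws using zs(2) ys(3) card_I_snoc(2)[OF w a n] by simp
    show ?thesis using e l zs(1) by (intro exI[of _ zs]) simp
  qed
qed

lemma card_I_le: "set xs \<subseteq> \<Delta> \<Longrightarrow> card (I (word_prod xs)) \<le> length xs"
proof (induction xs rule: rev_induct)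
  case (snoc a xs)
  have a: "a \<in> \<Delta>" and xs: "set xs \<subseteq> \<Delta>" using snoc.prems by auto
  have w: "word_prod xs \<in> W" using word_W[OF xs] .
  have "card (I (word_prod xs \<circ> refl a)) \<le> Suc (card (I (word_prod xs)))"
    using card_I_snoc[OF w a] W_pos_cases[OF w simple_pos[OF a]] by fastforce
  then show ?case using snoc.IH xs unfolding word_prod_snoc length_append_singleton by linarith
qed (simp add: I_id I_id')

lemma len_eq: assumes w: "w \<in> W" shows "len \<Delta> w = card (I w)"
proof -
  obtain xs where xs: "set xs \<subseteq> \<Delta>" "w = word_prod xs" using w by (auto simp: weyl_word)
  obtain ys where ys: "set ys \<subseteq> \<Delta>" "word_prod ys = w" "length ys = card (I w)"
    using reduce_word[OF xs(1)] xs(2) by auto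
  let ?Q = "\<lambda>n. \<exists>as. length as = n \<and> set as \<subseteq> \<Delta> \<and> w = word_prod as"
  have le: "len \<Delta> w \<le> card (I w)" unfolding len_def
    by (rule Least_le) (use ys in auto)
  have "?Q (len \<Delta> w)" unfolding len_def by (rule LeastI[of ?Q]) (use ys in auto)
  then obtain as where as: "length as = len \<Delta> w" "set as \<subseteq> \<Delta>" "w = word_prod as" by auto
  then have "card (I w) \<le> len \<Delta> w" using card_I_le by metis
  with le show ?thesis by simp
qed

lemma I_empty_id: assumes w: "w \<in> W" "I w = {}" shows "w = id"
proof -
  obtain xs where xs: "set xs \<subseteq> \<Delta>" "w = word_prod xs" using w by (auto simp: weyl_word)
  obtain ys where ys: "set ys \<subseteq> \<Delta>" "word_prod ys = w" "length ys = card (I w)"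
    using reduce_word[OF xs(1)] xs(2) by auto
  then show ?thesis using w by auto
qed

lemma card_I_inv: assumes w: "w \<in> W" shows "card (I (inv w)) = card (I w)"
proof -
  have le: "card (I (inv v)) \<le> card (I v)" if v: "v \<in> W" for v
  proof -
    obtain xs where xs: "set xs \<subseteq> \<Delta>" "v = word_prod xs" using v by (auto simp: weyl_word)
    obtain ys where ys: "set ys \<subseteq> \<Delta>" "word_prod ys = v" "length ys = card (I v)"
      using reduce_word[OF xs(1)] xs(2) by auto
    have ys0: "0 \<notin> set ys" using ys zero_Delta by auto
    have "inv v = word_prod (rev ys)"
      using word_prod_rev[OF ys0] ys by (auto intro: inv_unique_comp)
    then show ?thesis using card_I_le[of "rev ys"] ys by simp
  qed
  show ?thesis using le[OF w] le[OF W_inv_in[OF w]] W_inv_inv[OF w] by simp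
qed

lemma cone_sum:
  assumes "finite S" "\<And>i. i \<in> S \<Longrightarrow> c i \<ge> 0 \<and> x i \<in> span \<Delta> \<and> (\<forall>\<delta>\<in>\<Delta>. cf (x i) \<delta> \<ge> 0)"
  shows "(\<Sum>i\<in>S. c i *\<^sub>R x i) \<in> span \<Delta> \<and> (\<forall>\<delta>\<in>\<Delta>. cf (\<Sum>i\<in>S. c i *\<^sub>R x i) \<delta> \<ge> 0)"
  using assms
proof (induction S rule: finite_induct)
  case empty then show ?case by (simp add: representation_zero span_zero)
next
  case (insert j S)
  have xj: "x j \<in> span \<Delta>" "c j \<ge> 0" "\<forall>\<delta>\<in>\<Delta>. cf (x j) \<delta> \<ge> 0" using insert.prems by auto
  have IH: "(\<Sum>i\<in>S. c i *\<^sub>R x i) \<in> span \<Delta>" "\<forall>\<delta>\<in>\<Delta>. cf (\<Sum>i\<in>S. c i *\<^sub>R x i) \<delta> \<ge> 0"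
    using insert.IH insert.prems by auto
  have sj: "c j *\<^sub>R x j \<in> span \<Delta>" using xj by (simp add: span_scale)
  show ?case using insert.hyps IH xj sj
    by (simp add: span_add cf_add cf_scale)
qed

lemma rep_J:
  assumes J: "J \<subseteq> \<Delta>" and b: "\<beta> \<in> span J"
  shows "\<beta> = (\<Sum>\<delta>\<in>J. cf \<beta> \<delta> *\<^sub>R \<delta>)" and "\<And>\<delta>. \<delta> \<notin> J \<Longrightarrow> cf \<beta> \<delta> = 0"
proof -
  have eq: "cf \<beta> = representation J \<beta>" by (rule representation_extend[OF ind b J])
  have indJ: "independent J" using ind J dependent_mono by blast
  have finJ: "finite J" using J fin_Delta finite_subset by blast
  show "\<beta> = (\<Sum>\<delta>\<in>J. cf \<beta> \<delta> *\<^sub>R \<delta>)" unfolding eq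
    using sum_representation_eq[OF indJ b finJ] by simp
  show "\<And>\<delta>. \<delta> \<notin> J \<Longrightarrow> cf \<beta> \<delta> = 0" unfolding eq using representation_ne_zero by blast
qed

lemma pos_by_simple:
  assumes w: "w \<in> W" and J: "J \<subseteq> \<Delta>" and h: "\<And>\<delta>. \<delta> \<in> J \<Longrightarrow> w \<delta> \<in> P"
    and b: "\<beta> \<in> P" "\<beta> \<in> span J"
  shows "w \<beta> \<in> P"
proof -
  have finJ: "finite J" using J fin_Delta finite_subset by blast
  have "w \<beta> = w (\<Sum>\<delta>\<in>J. cf \<beta> \<delta> *\<^sub>R \<delta>)" using rep_J[OF J b(2)] by simp
  also have "\<dots> = (\<Sum>\<delta>\<in>J. cf \<beta> \<delta> *\<^sub>R w \<delta>)"
    using W_linear[OF w] by (simp add: linear_sum linear_scale)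
  finally have eq: "w \<beta> = (\<Sum>\<delta>\<in>J. cf \<beta> \<delta> *\<^sub>R w \<delta>)" .
  have "\<forall>\<delta>'\<in>\<Delta>. cf (\<Sum>\<delta>\<in>J. cf \<beta> \<delta> *\<^sub>R w \<delta>) \<delta>' \<ge> 0"
  proof (rule conjunct2[OF cone_sum[OF finJ]])
    fix i assume i: "i \<in> J"
    have "w i \<in> P" using h i by auto
    then show "cf \<beta> i \<ge> 0 \<and> w i \<in> span \<Delta> \<and> (\<forall>\<delta>\<in>\<Delta>. cf (w i) \<delta> \<ge> 0)"
      using posD[OF b(1)] i J posD Phi_span pos_sub by blast
  qed
  moreover have "w \<beta> \<in> \<Phi>" using weyl_Phi[OF w] b pos_sub by auto
  ultimately show ?thesis using eq posI by auto
qed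

lemma I_nonempty_simple:
  assumes w: "w \<in> W" and J: "J \<subseteq> \<Delta>" and ne: "I w \<inter> span J \<noteq> {}"
  shows "\<exists>\<delta>\<in>J. - w \<delta> \<in> P"
proof (rule ccontr)
  assume "\<not> ?thesis"
  then have "\<And>\<delta>. \<delta> \<in> J \<Longrightarrow> w \<delta> \<in> P" using W_pos_cases[OF w] simple_pos J by blast
  then have "w \<beta> \<in> P" if "\<beta> \<in> P" "\<beta> \<in> span J" for \<beta> using pos_by_simple[OF w J] that by blast
  then show False using ne not_both by (auto simp: I_iff)
qed

lemma card_Int_Diff': "finite A \<Longrightarrow> card A = card (A \<inter> B) + card (A - B)"
  by (rule card_Int_Diff)

lemma len_formula:
  assumes x: "x \<in> W" and y: "y \<in> W"
  shows "card (I (x \<circ> y)) + 2 * card (I x \<inter> N y) = card (I x) + card (N y)"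
proof -
  have yi: "inv y \<in> W" using W_inv_in[OF y] .
  define S1 where "S1 = {\<beta> \<in> I (x \<circ> y). y \<beta> \<in> P}"
  define S2 where "S2 = {\<beta> \<in> I (x \<circ> y). - y \<beta> \<in> P}"
  have un: "I (x \<circ> y) = S1 \<union> S2" using W_pos_cases[OF y] I_sub unfolding S1_def S2_def by blast
  have dis: "S1 \<inter> S2 = {}" using not_both unfolding S1_def S2_def by blast
  have f1: "finite S1" "finite S2" using fin_I unfolding S1_def S2_def by auto
  have im1: "y ` S1 = I x - N y"
  proof (intro equalityI subsetI)
    fix g assume "g \<in> y ` S1"
    then obtain \<beta> where b: "\<beta> \<in> P" "- x (y \<beta>) \<in> P" "y \<beta> \<in> P" "g = y \<beta>" by (auto simp: S1_def I_iff)
    then have "inv y g = \<beta>" using W_inv_apply[OF y] by simp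
    then show "g \<in> I x - N y" using b not_both by (auto simp: I_iff)
  next
    fix g assume g: "g \<in> I x - N y"
    then have gP: "g \<in> P" "- x g \<in> P" "- inv y g \<notin> P" by (auto simp: I_iff)
    have "inv y g \<in> P" using W_pos_cases[OF yi gP(1)] gP(3) by auto
    moreover have "y (inv y g) = g" using W_inv_apply[OF y] by simp
    ultimately have "inv y g \<in> S1" using gP by (auto simp: S1_def I_iff)
    then show "g \<in> y ` S1" using \<open>y (inv y g) = g\<close> by (metis image_eqI)
  qed
  have im2: "(\<lambda>\<beta>. - y \<beta>) ` S2 = N y - I x"
  proof (intro equalityI subsetI)
    fix g assume "g \<in> (\<lambda>\<beta>. - y \<beta>) ` S2"
    then obtain \<beta> where b: "\<beta> \<in> P" "- x (y \<beta>) \<in> P" "- y \<beta> \<in> P" "g = - y \<beta>" by (auto simp: S2_def I_iff)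
    have "inv y g = - \<beta>" using W_inv_apply[OF y] b(4) W_neg[OF yi] by simp
    moreover have "x g = - x (y \<beta>)" using b(4) W_neg[OF x] by simp
    ultimately show "g \<in> N y - I x" using b not_both by (auto simp: I_iff)
  next
    fix g assume g: "g \<in> N y - I x"
    then have gP: "g \<in> P" "- inv y g \<in> P" "- x g \<notin> P" by (auto simp: I_iff)
    let ?b = "- inv y g"
    have yb: "y ?b = - g" using W_neg[OF y] W_inv_apply[OF y] by simp
    have "x g \<in> P" using W_pos_cases[OF x gP(1)] gP(3) by auto
    then have "- x (y ?b) \<in> P" using yb W_neg[OF x] by simp
    then have "?b \<in> S2" using gP(2) yb gP(1) by (auto simp: S2_def I_iff)
    moreover have "g = - y ?b" using yb by simp
    ultimately show "g \<in> (\<lambda>\<beta>. - y \<beta>) ` S2" by blast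
  qed
  have inj1: "inj_on y S1" using W_inj[OF y] by (auto intro: inj_onI)
  have inj2: "inj_on (\<lambda>\<beta>. - y \<beta>) S2" using W_inj[OF y] by (auto intro: inj_onI)
  have c1: "card S1 = card (I x - N y)" using card_image[OF inj1] im1 by simp
  have c2: "card S2 = card (N y - I x)" using card_image[OF inj2] im2 by simp
  have "card (I (x \<circ> y)) = card S1 + card S2" using un dis f1 card_Un_disjoint by metis
  moreover have "card (I x) = card (I x \<inter> N y) + card (I x - N y)" by (rule card_Int_Diff[OF fin_I])
  moreover have "card (N y) = card (N y \<inter> I x) + card (N y - I x)" by (rule card_Int_Diff[OF fin_I])
  moreover have "N y \<inter> I x = I x \<inter> N y" by blast
  ultimately show ?thesis using c1 c2 by simp
qed

lemma len_additive_iff: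
  assumes x: "x \<in> W" and y: "y \<in> W"
  shows "card (I (x \<circ> y)) = card (I x) + card (I y) \<longleftrightarrow> I x \<inter> N y = {}"
  using len_formula[OF x y] card_I_inv[OF y] fin_I by auto

end

context rs
begin

lemma pos_by_simple_lin:
  assumes f: "linear f" and J: "J \<subseteq> \<Delta>" and h: "\<And>\<delta>. \<delta> \<in> J \<Longrightarrow> f \<delta> \<in> P"
    and b: "\<beta> \<in> P" "\<beta> \<in> span J" and fb: "f \<beta> \<in> \<Phi>"
  shows "f \<beta> \<in> P"
proof -
  have finJ: "finite J" using J fin_Delta finite_subset by blast
  have "f \<beta> = f (\<Sum>\<delta>\<in>J. cf \<beta> \<delta> *\<^sub>R \<delta>)" using rep_J[OF J b(2)] by simp
  also have "\<dots> = (\<Sum>\<delta>\<in>J. cf \<beta> \<delta> *\<^sub>R f \<delta>)"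
    using f by (simp add: linear_sum linear_scale)
  finally have eq: "f \<beta> = (\<Sum>\<delta>\<in>J. cf \<beta> \<delta> *\<^sub>R f \<delta>)" .
  have "\<forall>\<delta>'\<in>\<Delta>. cf (\<Sum>\<delta>\<in>J. cf \<beta> \<delta> *\<^sub>R f \<delta>) \<delta>' \<ge> 0"
  proof (rule conjunct2[OF cone_sum[OF finJ]])
    fix i assume i: "i \<in> J"
    have "f i \<in> P" using h i by auto
    then show "cf \<beta> i \<ge> 0 \<and> f i \<in> span \<Delta> \<and> (\<forall>\<delta>\<in>\<Delta>. cf (f i) \<delta> \<ge> 0)"
      using posD[OF b(1)] i J posD Phi_span pos_sub by blast
  qed
  then show ?thesis using eq posI fb by auto
qed

section \<open>Longest element\<close>

definition w0 :: "'a \<Rightarrow> 'a" where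
  "w0 = (SOME w. w \<in> W \<and> (\<forall>\<beta>\<in>P. - w \<beta> \<in> P))"

lemma w0_exists: "\<exists>w. w \<in> W \<and> (\<forall>\<beta>\<in>P. - w \<beta> \<in> P)"
proof -
  have "\<exists>x. x \<in> W \<and> (\<forall>y. y \<in> W \<longrightarrow> card (I y) \<le> card (I x))"
    by (rule Lattices_Big.ex_has_greatest_nat[of "\<lambda>w. w \<in> W" id _ "Suc (card P)"])
       (use weyl_id card_mono[OF fin_P I_sub] in \<open>auto simp: le_imp_less_Suc\<close>)
  then obtain w where w: "w \<in> W" and mx: "\<And>y. y \<in> W \<Longrightarrow> card (I y) \<le> card (I w)" by blast
  have neg: "- w \<delta> \<in> P" if d: "\<delta> \<in> \<Delta>" for \<delta>
  proof (rule ccontr)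
    assume "- w \<delta> \<notin> P"
    then have "w \<delta> \<in> P" using W_pos_cases[OF w simple_pos[OF d]] by auto
    then have "card (I (w \<circ> refl \<delta>)) = Suc (card (I w))" using card_I_snoc(1)[OF w d] by simp
    moreover have "w \<circ> refl \<delta> \<in> W" using weyl_comp[OF w weyl_refl[OF d]] .
    ultimately show False using mx by fastforce
  qed
  have "- w \<beta> \<in> P" if b: "\<beta> \<in> P" for \<beta>
  proof -
    have lin: "linear (\<lambda>x. - w x)" using W_linear[OF w] by (simp add: linear_compose_neg)
    have "(\<lambda>x. - w x) \<beta> \<in> P"
      by (rule pos_by_simple_lin[OF lin order_refl])
         (use neg b Phi_span pos_sub weyl_Phi[OF w] neg_Phi in auto)
    then show ?thesis by simp
  qed
  with w show ?thesis by blast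
qed

lemma w0: "w0 \<in> W" "\<And>\<beta>. \<beta> \<in> P \<Longrightarrow> - w0 \<beta> \<in> P"
  using someI_ex[OF w0_exists] unfolding w0_def[symmetric] by auto

lemma I_w0_comp: assumes z: "z \<in> W" shows "I (w0 \<circ> z) = P - I z"
proof (intro equalityI subsetI)
  fix \<beta> assume "\<beta> \<in> I (w0 \<circ> z)"
  then have b: "\<beta> \<in> P" "- w0 (z \<beta>) \<in> P" by (auto simp: I_iff)
  have "z \<beta> \<in> P"
  proof (rule ccontr)
    assume "z \<beta> \<notin> P"
    then have "- z \<beta> \<in> P" using W_pos_cases[OF z b(1)] by auto
    then have "- w0 (- z \<beta>) \<in> P" using w0 by auto
    then have "w0 (z \<beta>) \<in> P" using W_neg[OF w0(1)] by simp
    then show False using b(2) not_both by auto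
  qed
  then show "\<beta> \<in> P - I z" using b not_both by (auto simp: I_iff)
next
  fix \<beta> assume "\<beta> \<in> P - I z"
  then have b: "\<beta> \<in> P" "- z \<beta> \<notin> P" by (auto simp: I_iff)
  then have "z \<beta> \<in> P" using W_pos_cases[OF z b(1)] by auto
  then show "\<beta> \<in> I (w0 \<circ> z)" using w0 b by (auto simp: I_iff)
qed

lemma w0_w0: "w0 \<circ> w0 = id"
  using I_w0_comp[OF w0(1)] I_empty_id[OF weyl_comp[OF w0(1) w0(1)]] 
  by (metis Diff_cancel I_w0_comp[OF weyl_id] I_id Diff_empty comp_id)

lemma w0_w0_apply: "w0 (w0 x) = x"
  using w0_w0 by (metis comp_apply id_apply)

lemma inv_w0: "inv w0 = w0"
  using w0_w0 by (metis inv_unique_comp)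

section \<open>Splittings in terms of inversion sets\<close>

definition Aset :: "('a \<Rightarrow> 'a) \<Rightarrow> ('a \<Rightarrow> 'a) set" where
  "Aset u = {x \<in> W. I x \<inter> N u = {}}"

definition Bset :: "('a \<Rightarrow> 'a) \<Rightarrow> ('a \<Rightarrow> 'a) set" where
  "Bset u = {y \<in> W. N y \<subseteq> N u}"

definition spl :: "('a \<Rightarrow> 'a) \<Rightarrow> bool" where
  "spl u \<longleftrightarrow> bij_betw (\<lambda>(x, y). x \<circ> y) (Aset u \<times> Bset u) W"

lemma final_link:
  assumes u: "u \<in> W" and s: "spl u"
  shows "splitting \<Delta> (gen_quot \<Delta> {v \<in> W. right_le \<Phi> \<Delta> v u}) {v \<in> W. right_le \<Phi> \<Delta> v u}"
proof -
  have B: "{v \<in> W. right_le \<Phi> \<Delta> v u} = Bset u"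
    by (simp add: Bset_def right_le_def left_le_def)
  have add: "len \<Delta> (x \<circ> y) = len \<Delta> x + len \<Delta> y" if "x \<in> Aset u" "y \<in> Bset u" for x y
  proof -
    have xy: "x \<in> W" "y \<in> W" "I x \<inter> N y = {}" using that by (auto simp: Aset_def Bset_def)
    then show ?thesis using len_additive_iff[OF xy(1,2)] len_eq[OF weyl_comp[OF xy(1,2)]]
        len_eq[OF xy(1)] len_eq[OF xy(2)] by simp
  qed
  have A: "gen_quot \<Delta> (Bset u) = Aset u"
  proof (intro equalityI subsetI)
    fix x assume "x \<in> gen_quot \<Delta> (Bset u)"
    then have x: "x \<in> W" "\<And>v. v \<in> Bset u \<Longrightarrow> len \<Delta> (x \<circ> v) = len \<Delta> x + len \<Delta> v"
      by (auto simp: gen_quot_def)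
    have "u \<in> Bset u" using u by (simp add: Bset_def)
    then have "len \<Delta> (x \<circ> u) = len \<Delta> x + len \<Delta> u" using x by blast
    then have "I x \<inter> N u = {}" using len_additive_iff[OF x(1) u] len_eq[OF weyl_comp[OF x(1) u]]
        len_eq[OF x(1)] len_eq[OF u] by simp
    then show "x \<in> Aset u" using x by (simp add: Aset_def)
  next
    fix x assume "x \<in> Aset u"
    then show "x \<in> gen_quot \<Delta> (Bset u)" using add by (auto simp: gen_quot_def Aset_def)
  qed
  show ?thesis unfolding B A splitting_def using s add by (simp add: spl_def)
qed

section \<open>Symmetry under multiplication by the longest element\<close>

definition tau :: "('a \<Rightarrow> 'a) \<Rightarrow> ('a \<Rightarrow> 'a)" where
  "tau z = w0 \<circ> z \<circ> w0"

lemma tau_W: "z \<in> W \<Longrightarrow> tau z \<in> W"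
  unfolding tau_def using w0(1) weyl_comp by blast

lemma tau_tau: "tau (tau z) = z"
  unfolding tau_def by (rule ext) (simp add: w0_w0_apply)

lemma tau_comp: "tau (a \<circ> b) = tau a \<circ> tau b"
  unfolding tau_def by (rule ext) (simp add: w0_w0_apply)

lemma tau_inv: assumes z: "z \<in> W" shows "inv (tau z) = tau (inv z)"
proof -
  have "inv (tau z) = inv w0 \<circ> inv (w0 \<circ> z)" unfolding tau_def
    by (rule W_inv_comp[OF weyl_comp[OF w0(1) z] w0(1)])
  also have "\<dots> = inv w0 \<circ> (inv z \<circ> inv w0)" by (simp only: W_inv_comp[OF w0(1) z])
  also have "\<dots> = tau (inv z)" unfolding inv_w0 tau_def by (rule ext) simp
  finally show ?thesis .
qed

abbreviation sg :: "'a \<Rightarrow> 'a" where "sg \<beta> \<equiv> - w0 \<beta>"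

lemma sg_sg: "sg (sg \<beta>) = \<beta>"
proof -
  have "w0 (- w0 \<beta>) = - w0 (w0 \<beta>)" by (rule W_neg[OF w0(1)])
  then show ?thesis by (simp add: w0_w0_apply)
qed

lemma sg_P: "\<beta> \<in> P \<Longrightarrow> sg \<beta> \<in> P" using w0 by blast

lemma w0_inj[simp]: "w0 a = w0 b \<longleftrightarrow> a = b" using W_inj[OF w0(1)] .

lemma sg_inj: "sg a = sg b \<Longrightarrow> a = b" by simp

lemma I_tau: assumes z: "z \<in> W" shows "I (tau z) = sg ` I z"
proof (intro equalityI subsetI)
  fix \<beta> assume "\<beta> \<in> I (tau z)"
  then have b: "\<beta> \<in> P" "- w0 (z (w0 \<beta>)) \<in> P" by (auto simp: I_iff tau_def)
  let ?g = "sg \<beta>"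
  have g: "?g \<in> P" using sg_P b by auto
  have "- z ?g \<in> P"
  proof -
    have "w0 (z (w0 \<beta>)) = - w0 (z ?g)" using W_neg[OF z] W_neg[OF w0(1)] by simp
    then have "w0 (z ?g) \<in> P" using b(2) by simp
    then have "- w0 (w0 (z ?g)) \<in> P \<or> w0 (w0 (z ?g)) \<in> P" by (metis sg_P sg_sg)
    then show ?thesis
      by (metis W_neg[OF w0(1)] \<open>w0 (z ?g) \<in> P\<close> not_both sg_P w0_w0_apply)
  qed
  then have "?g \<in> I z" using g by (simp add: I_iff)
  then show "\<beta> \<in> sg ` I z" using sg_sg by (metis image_eqI)
next
  fix \<beta> assume "\<beta> \<in> sg ` I z"
  then obtain g where g: "g \<in> P" "- z g \<in> P" "\<beta> = sg g" by (auto simp: I_iff)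
  have bP: "\<beta> \<in> P" using g sg_P by auto
  have "w0 \<beta> = - g" using g(3) W_neg[OF w0(1)] w0_w0_apply by simp
  then have "- tau z \<beta> = - w0 (- z g)" unfolding tau_def using W_neg[OF z] by simp
  then have "- tau z \<beta> \<in> P" using sg_P[OF g(2)] by simp
  then show "\<beta> \<in> I (tau z)" using bP by (simp add: I_iff)
qed

lemma N_tau: assumes z: "z \<in> W" shows "N (tau z) = sg ` N z"
  using I_tau[OF W_inv_in[OF z]] tau_inv[OF z] by simp

lemma N_w0_comp: assumes u: "u \<in> W" shows "N (w0 \<circ> u) = sg ` (P - N u)"
proof -
  have "inv (w0 \<circ> u) = inv u \<circ> w0" using W_inv_comp[OF w0(1) u] inv_w0 by simp
  also have "\<dots> = w0 \<circ> (tau (inv u))" unfolding tau_def by (rule ext) (simp add: w0_w0_apply)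
  finally have "N (w0 \<circ> u) = I (w0 \<circ> tau (inv u))" by simp
  also have "\<dots> = P - I (tau (inv u))" using I_w0_comp tau_W W_inv_in u by blast
  also have "\<dots> = P - sg ` N u" using I_tau W_inv_in u by simp
  also have "\<dots> = sg ` (P - N u)"
  proof (intro equalityI subsetI)
    fix \<beta> assume b: "\<beta> \<in> P - sg ` N u"
    then have "sg \<beta> \<in> P - N u" using sg_P sg_sg by (metis DiffD1 DiffD2 DiffI image_eqI)
    then show "\<beta> \<in> sg ` (P - N u)" using sg_sg by (metis image_eqI)
  next
    fix \<beta> assume "\<beta> \<in> sg ` (P - N u)"
    then obtain g where "g \<in> P" "g \<notin> N u" "\<beta> = sg g" by auto
    then show "\<beta> \<in> P - sg ` N u" using sg_P sg_inj by auto
  qed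
  finally show ?thesis .
qed

lemma sg_P_split: "X \<subseteq> P \<Longrightarrow> P - sg ` (P - X) = sg ` X"
proof (intro equalityI subsetI)
  fix \<beta> assume X: "X \<subseteq> P" and b: "\<beta> \<in> P - sg ` (P - X)"
  then have "sg \<beta> \<in> X" using sg_P sg_sg by (metis DiffD1 DiffD2 DiffI image_eqI)
  then show "\<beta> \<in> sg ` X" using sg_sg by (metis image_eqI)
next
  fix \<beta> assume X: "X \<subseteq> P" and "\<beta> \<in> sg ` X"
  then obtain g where "g \<in> X" "\<beta> = sg g" by auto
  then show "\<beta> \<in> P - sg ` (P - X)" using X sg_P sg_inj by auto
qed

lemma spl_w0:
  assumes u: "u \<in> W" and s: "spl u"
  shows "spl (w0 \<circ> u)"
proof -
  let ?f = "\<lambda>(x, y). x \<circ> y"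
  have bij: "bij_betw ?f (Aset u \<times> Bset u) W" using s by (simp add: spl_def)
  have NuP: "N u \<subseteq> P" using I_sub by blast
  have Nw: "N (w0 \<circ> u) = sg ` (P - N u)" using N_w0_comp[OF u] .
  have fwd: "tau (inv y) \<in> Aset (w0 \<circ> u) \<and> tau (inv x) \<in> Bset (w0 \<circ> u)"
    if "x \<in> Aset u" "y \<in> Bset u" for x y
  proof -
    have x: "x \<in> W" "I x \<inter> N u = {}" and y: "y \<in> W" "N y \<subseteq> N u"
      using that by (auto simp: Aset_def Bset_def)
    have "I (tau (inv y)) = sg ` N y" using I_tau W_inv_in[OF y(1)] by simp
    then have A: "I (tau (inv y)) \<inter> N (w0 \<circ> u) = {}" using Nw y(2) sg_inj by auto
    have "N (tau (inv x)) = sg ` I x"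
      using N_tau[OF W_inv_in[OF x(1)]] W_inv_inv[OF x(1)] by simp
    moreover have "I x \<subseteq> P - N u" using x(2) I_sub by blast
    ultimately have "N (tau (inv x)) \<subseteq> N (w0 \<circ> u)" unfolding Nw by (metis image_mono)
    then show ?thesis using A tau_W W_inv_in x y by (auto simp: Aset_def Bset_def)
  qed
  have bwd: "tau (inv y') \<in> Aset u \<and> tau (inv x') \<in> Bset u"
    if "x' \<in> Aset (w0 \<circ> u)" "y' \<in> Bset (w0 \<circ> u)" for x' y'
  proof -
    have x: "x' \<in> W" "I x' \<inter> sg ` (P - N u) = {}" and y: "y' \<in> W" "N y' \<subseteq> sg ` (P - N u)"
      using that Nw by (auto simp: Aset_def Bset_def)
    have "I (tau (inv y')) = sg ` N y'" using I_tau W_inv_in[OF y(1)] by simp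
    also have "\<dots> \<subseteq> sg ` sg ` (P - N u)" using y(2) by auto
    also have "\<dots> = P - N u" using sg_sg by (simp add: image_comp o_def)
    finally have F1: "I (tau (inv y')) \<inter> N u = {}" by auto
    have F2: "N (tau (inv x')) = sg ` I x'"
      using N_tau[OF W_inv_in[OF x(1)]] W_inv_inv[OF x(1)] by simp
    have "I x' \<subseteq> sg ` N u" using x(2) sg_P_split[OF NuP] I_sub by blast
    then have "sg ` I x' \<subseteq> sg ` sg ` N u" by (rule image_mono)
    also have "sg ` sg ` N u = N u" using sg_sg by (simp add: image_comp o_def)
    finally have F3: "N (tau (inv x')) \<subseteq> N u" using F2 by simp
    have a1: "tau (inv y') \<in> W" "tau (inv x') \<in> W" using tau_W W_inv_in x(1) y(1) by auto
    show ?thesis unfolding Aset_def Bset_def using a1 F1 F3 by blast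
  qed
  have key: "tau (inv y) \<circ> tau (inv x) = tau (inv (x \<circ> y))" if "x \<in> W" "y \<in> W" for x y
    using that by (simp add: tau_comp[symmetric] W_inv_comp)
  show ?thesis unfolding spl_def bij_betw_def
  proof
    show "inj_on ?f (Aset (w0 \<circ> u) \<times> Bset (w0 \<circ> u))"
    proof (rule inj_onI, clarify)
      fix x1 y1 x2 y2
      assume m: "x1 \<in> Aset (w0 \<circ> u)" "y1 \<in> Bset (w0 \<circ> u)" "x2 \<in> Aset (w0 \<circ> u)" "y2 \<in> Bset (w0 \<circ> u)"
        and e: "x1 \<circ> y1 = x2 \<circ> y2"
      have W': "x1 \<in> W" "y1 \<in> W" "x2 \<in> W" "y2 \<in> W" using m by (auto simp: Aset_def Bset_def)
      have eq: "?f (tau (inv y1), tau (inv x1)) = ?f (tau (inv y2), tau (inv x2))"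
        using key[of x1 y1] key[of x2 y2] W' e by simp
      have mem1: "(tau (inv y1), tau (inv x1)) \<in> Aset u \<times> Bset u" using bwd[OF m(1,2)] by simp
      have mem2: "(tau (inv y2), tau (inv x2)) \<in> Aset u \<times> Bset u" using bwd[OF m(3,4)] by simp
      have injf: "inj_on ?f (Aset u \<times> Bset u)" using bij by (simp add: bij_betw_def)
      have "(tau (inv y1), tau (inv x1)) = (tau (inv y2), tau (inv x2))"
        by (rule inj_onD[OF injf eq mem1 mem2])
      then have "tau (inv y1) = tau (inv y2)" "tau (inv x1) = tau (inv x2)" by simp_all
      then have "tau (tau (inv y1)) = tau (tau (inv y2))" "tau (tau (inv x1)) = tau (tau (inv x2))"
        by simp_all
      then have "inv y1 = inv y2" "inv x1 = inv x2" by (simp_all only: tau_tau)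
      then have "inv (inv y1) = inv (inv y2)" "inv (inv x1) = inv (inv x2)" by simp_all
      then show "x1 = x2 \<and> y1 = y2" by (simp only: W_inv_inv[OF W'(1)] W_inv_inv[OF W'(2)]
          W_inv_inv[OF W'(3)] W_inv_inv[OF W'(4)])
    qed
  next
    show "?f ` (Aset (w0 \<circ> u) \<times> Bset (w0 \<circ> u)) = W"
    proof (intro equalityI subsetI)
      fix w assume "w \<in> ?f ` (Aset (w0 \<circ> u) \<times> Bset (w0 \<circ> u))"
      then show "w \<in> W" by (auto simp: Aset_def Bset_def intro: weyl_comp)
    next
      fix w assume w: "w \<in> W"
      have "tau (inv w) \<in> W" using tau_W W_inv_in w by blast
      then have "tau (inv w) \<in> ?f ` (Aset u \<times> Bset u)" using bij by (simp add: bij_betw_def)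
      then obtain p where p: "p \<in> Aset u \<times> Bset u" "tau (inv w) = ?f p" by blast
      obtain x y where "p = (x, y)" by (cases p)
      then have xy: "x \<in> Aset u" "y \<in> Bset u" "x \<circ> y = tau (inv w)" using p by auto
      have W': "x \<in> W" "y \<in> W" using xy by (auto simp: Aset_def Bset_def)
      have "tau (inv y) \<circ> tau (inv x) = tau (inv (tau (inv w)))" using key[OF W'] xy by simp
      also have "\<dots> = w" using tau_inv[OF W_inv_in[OF w]] W_inv_inv[OF w] tau_tau by simp
      finally have "w = ?f (tau (inv y), tau (inv x))" by simp
      moreover have "(tau (inv y), tau (inv x)) \<in> Aset (w0 \<circ> u) \<times> Bset (w0 \<circ> u)"
        using fwd[OF xy(1,2)] by simp
      ultimately show "w \<in> ?f ` (Aset (w0 \<circ> u) \<times> Bset (w0 \<circ> u))" by (rule image_eqI)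
    qed
  qed
qed

end

context rs
begin

lemma nonneg_comb_restrict:
  assumes J: "J \<subseteq> \<Delta>" and b: "\<beta> \<in> span J" and nc: "nonneg_comb \<Delta> \<beta>"
  shows "nonneg_comb J \<beta>"
proof -
  obtain c where c: "\<beta> = (\<Sum>\<delta>\<in>\<Delta>. real (c \<delta>) *\<^sub>R \<delta>)" using nc by (auto simp: nonneg_comb_def)
  have z: "real (c \<delta>) = 0" if "\<delta> \<in> \<Delta>" "\<delta> \<notin> J" for \<delta>
    using coef_sum[OF fin_Delta ind c that(1)] rep_J(2)[OF J b that(2)] by simp
  have "\<beta> = (\<Sum>\<delta>\<in>J. real (c \<delta>) *\<^sub>R \<delta>)"
    unfolding c by (rule sum.mono_neutral_right[OF fin_Delta J]) (use z in auto)
  then show ?thesis by (auto simp: nonneg_comb_def)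
qed

lemma nonneg_comb_extend:
  assumes J: "J \<subseteq> \<Delta>" and nc: "nonneg_comb J \<beta>"
  shows "nonneg_comb \<Delta> \<beta>"
proof -
  obtain c where c: "\<beta> = (\<Sum>\<delta>\<in>J. real (c \<delta>) *\<^sub>R \<delta>)" using nc by (auto simp: nonneg_comb_def)
  let ?c = "\<lambda>\<delta>. if \<delta> \<in> J then c \<delta> else 0"
  have "\<beta> = (\<Sum>\<delta>\<in>\<Delta>. real (?c \<delta>) *\<^sub>R \<delta>)"
    unfolding c by (rule sum.mono_neutral_cong_left[OF fin_Delta J]) auto
  then show ?thesis unfolding nonneg_comb_def by (rule exI[where x = "\<lambda>\<delta>. if \<delta> \<in> J then c \<delta> else 0"])
qed

lemma refl_span: "\<alpha> \<in> J \<Longrightarrow> x \<in> span J \<Longrightarrow> refl \<alpha> x \<in> span J"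
  unfolding refl_def by (rule span_diff, assumption, rule span_scale, rule span_base)

lemma sum_span: "(\<Sum>\<delta>\<in>J. f \<delta> *\<^sub>R \<delta>) \<in> span J"
  by (rule span_sum, rule span_scale, rule span_base)

lemma rs_sub: assumes J: "J \<subseteq> \<Delta>" shows "rs (\<Phi> \<inter> span J) J"
proof
  show "root_system (\<Phi> \<inter> span J)"
    unfolding root_system_def
  proof (intro conjI ballI allI impI)
    show "finite (\<Phi> \<inter> span J)" using fin_Phi by simp
    show "0 \<notin> \<Phi> \<inter> span J" using zero_Phi by simp
  next
    fix a b assume "a \<in> \<Phi> \<inter> span J" "b \<in> \<Phi> \<inter> span J"
    then show "refl a b \<in> \<Phi> \<inter> span J"
      using refl_Phi by (auto simp: refl_def intro!: span_diff span_scale)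
  next
    fix a b assume "a \<in> \<Phi> \<inter> span J" "b \<in> \<Phi> \<inter> span J"
    then show "2 * (b \<bullet> a) / (a \<bullet> a) \<in> \<int>" using RS unfolding root_system_def by auto
  next
    fix a c assume "a \<in> \<Phi> \<inter> span J" "c *\<^sub>R a \<in> \<Phi> \<inter> span J"
    then show "c = 1 \<or> c = -1" using reduced by auto
  qed
  show "simple_system (\<Phi> \<inter> span J) J"
    unfolding simple_system_def
  proof (intro conjI ballI)
    show "J \<subseteq> \<Phi> \<inter> span J" using J Delta_sub by (auto intro: span_base)
    show "independent J" using ind J dependent_mono by blast
  next
    fix b assume b: "b \<in> \<Phi> \<inter> span J"
    then show "nonneg_comb J b \<or> nonneg_comb J (- b)"
      using comb[of b] nonneg_comb_restrict[OF J] span_neg by blast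
  qed
qed

lemma pos_sub_eq: assumes J: "J \<subseteq> \<Delta>" shows "pos_roots (\<Phi> \<inter> span J) J = P \<inter> span J"
  using nonneg_comb_restrict[OF J] nonneg_comb_extend[OF J] by (auto simp: pos_roots_def)

context
  fixes J assumes J: "J \<subseteq> \<Delta>"
begin

lemma J0: "0 \<notin> J" using J zero_Delta by auto

lemma WJ_W: "w \<in> weyl J \<Longrightarrow> w \<in> W" using weyl_mono[OF J] by blast

lemma WJ_span: "w \<in> weyl J \<Longrightarrow> \<beta> \<in> span J \<Longrightarrow> w \<beta> \<in> span J"
proof (induction arbitrary: \<beta> rule: weyl.induct)
  case (weyl_step \<alpha> w)
  then show ?case by (simp add: refl_span)
qed simp

lemma WJ_diff: "w \<in> weyl J \<Longrightarrow> w \<beta> - \<beta> \<in> span J"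
proof (induction rule: weyl.induct)
  case weyl_id then show ?case by (simp add: span_zero)
next
  case (weyl_step \<alpha> w)
  have eq: "(refl \<alpha> \<circ> w) \<beta> - \<beta> = (w \<beta> - \<beta>) - (2 * (w \<beta> \<bullet> \<alpha>) / (\<alpha> \<bullet> \<alpha>)) *\<^sub>R \<alpha>"
    by (simp add: refl_def algebra_simps)
  have mem: "(w \<beta> - \<beta>) - (2 * (w \<beta> \<bullet> \<alpha>) / (\<alpha> \<bullet> \<alpha>)) *\<^sub>R \<alpha> \<in> span J"
    using weyl_step by (intro span_diff[OF _ span_scale[OF span_base]]) auto
  show ?case unfolding eq by (rule mem)
qed

lemma not_span_cf: assumes b: "\<beta> \<in> \<Phi>" "\<beta> \<notin> span J" shows "\<exists>\<delta>\<in>\<Delta> - J. cf \<beta> \<delta> \<noteq> 0"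
proof (rule ccontr)
  assume "\<not> ?thesis"
  then have z: "\<And>\<delta>. \<delta> \<in> \<Delta> - J \<Longrightarrow> cf \<beta> \<delta> = 0" by auto
  have "\<beta> = (\<Sum>\<delta>\<in>\<Delta>. cf \<beta> \<delta> *\<^sub>R \<delta>)" using span_expand Phi_span b by blast
  also have "\<dots> = (\<Sum>\<delta>\<in>J. cf \<beta> \<delta> *\<^sub>R \<delta>)"
    by (rule sum.mono_neutral_right[OF fin_Delta J]) (use z in auto)
  finally have "\<beta> \<in> span J" using sum_span by metis
  with b show False by simp
qed

lemma WJ_outside: assumes w: "w \<in> weyl J" and b: "\<beta> \<in> P" "\<beta> \<notin> span J"
  shows "w \<beta> \<in> P" "w \<beta> \<notin> span J"
proof -
  have bPhi: "\<beta> \<in> \<Phi>" using b pos_sub by auto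
  have wb: "w \<beta> \<in> \<Phi>" using weyl_Phi[OF WJ_W[OF w] bPhi] .
  have d: "w \<beta> - \<beta> \<in> span J" using WJ_diff[OF w] .
  show ns: "w \<beta> \<notin> span J"
  proof
    assume "w \<beta> \<in> span J"
    then have "w \<beta> - (w \<beta> - \<beta>) \<in> span J" using d span_diff by blast
    then show False using b by simp
  qed
  obtain \<delta> where \<delta>: "\<delta> \<in> \<Delta>" "\<delta> \<notin> J" "cf \<beta> \<delta> \<noteq> 0" using not_span_cf[OF bPhi b(2)] by auto
  have pos: "cf \<beta> \<delta> > 0" using posD[OF b(1) \<delta>(1)] \<delta>(3) by simp
  have "cf (w \<beta>) \<delta> = cf \<beta> \<delta> + cf (w \<beta> - \<beta>) \<delta>"
    using cf_add[OF Phi_span[OF bPhi] span_mono[OF J, THEN subsetD, OF d]] by simp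
  also have "cf (w \<beta> - \<beta>) \<delta> = 0" using rep_J(2)[OF J d \<delta>(2)] .
  finally have "cf (w \<beta>) \<delta> > 0" using pos by simp
  moreover have "- w \<beta> \<notin> P"
  proof
    assume "- w \<beta> \<in> P"
    then have "cf (- w \<beta>) \<delta> \<ge> 0" using posD \<delta>(1) by blast
    then show False using \<open>cf (w \<beta>) \<delta> > 0\<close> cf_neg[OF Phi_span[OF wb]] by simp
  qed
  ultimately show "w \<beta> \<in> P" using root_cases[OF wb] by blast
qed

lemma WJ_I_span: "w \<in> weyl J \<Longrightarrow> I w \<subseteq> span J"
  using WJ_outside not_both by (auto simp: I_iff) blast

lemma WJ_N_span: "w \<in> weyl J \<Longrightarrow> N w \<subseteq> span J"
  using WJ_I_span weyl_inv[OF J0] by blast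

lemma WJ_inv: "w \<in> weyl J \<Longrightarrow> inv w \<in> weyl J"
  using weyl_inv[OF J0] by blast

lemma I_sub_eq: assumes w: "w \<in> weyl J" shows "inv_set (\<Phi> \<inter> span J) J w = I w"
proof -
  have "inv_set (\<Phi> \<inter> span J) J w = {\<beta> \<in> P \<inter> span J. - w \<beta> \<in> P \<inter> span J}"
    by (simp add: inv_set_def pos_sub_eq[OF J])
  also have "\<dots> = I w"
    using WJ_I_span[OF w] WJ_span[OF w] span_neg by (auto simp: I_iff)
  finally show ?thesis .
qed

lemma I_span_WJ: "w \<in> W \<Longrightarrow> I w \<subseteq> span J \<Longrightarrow> w \<in> weyl J"
proof (induction "card (I w)" arbitrary: w rule: less_induct)
  case less
  show ?case
  proof (cases "I w = {}")
    case True
    then show ?thesis using I_empty_id[OF less.prems(1)] weyl_id by simp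
  next
    case False
    then have "I w \<inter> span J \<noteq> {}" using less.prems(2) by blast
    then obtain \<delta> where d: "\<delta> \<in> J" "- w \<delta> \<in> P" using I_nonempty_simple[OF less.prems(1) J] by blast
    have dD: "\<delta> \<in> \<Delta>" using d J by auto
    have d0: "\<delta> \<noteq> 0" using dD zero_Delta by auto
    let ?w' = "w \<circ> refl \<delta>"
    have w': "?w' \<in> W" using weyl_comp[OF less.prems(1) weyl_refl[OF dD]] .
    have c: "card (I ?w') < card (I w)" using card_I_snoc(2)[OF less.prems(1) dD d(2)] by simp
    have sub: "I ?w' \<subseteq> span J"
    proof
      fix \<beta> assume b: "\<beta> \<in> I ?w'"
      show "\<beta> \<in> span J"
      proof (cases "\<beta> = \<delta>")
        case True then show ?thesis using d by (simp add: span_base)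
      next
        case False
        have bP: "\<beta> \<in> P" "- w (refl \<delta> \<beta>) \<in> P" using b by (auto simp: I_iff)
        have "refl \<delta> \<beta> \<in> P" using refl_simple_pos[OF dD bP(1) False] .
        then have "refl \<delta> \<beta> \<in> I w" using bP by (simp add: I_iff)
        then have s: "refl \<delta> \<beta> \<in> span J" using less.prems(2) by blast
        have "\<beta> = refl \<delta> (refl \<delta> \<beta>)" using refl_refl[OF d0] by simp
        also have "\<dots> \<in> span J" using refl_span[OF d(1) s] .
        finally show ?thesis .
      qed
    qed
    have "?w' \<in> weyl J" using less.hyps[OF c w' sub] .
    then have "?w' \<circ> refl \<delta> \<in> weyl J" using weyl_comp weyl_refl[OF d(1)] by blast
    moreover have "?w' \<circ> refl \<delta> = w" by (rule ext) (simp add: refl_refl[OF d0])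
    ultimately show ?thesis by simp
  qed
qed

lemma decomp_exists:
  "w \<in> W \<Longrightarrow> \<exists>a c. a \<in> W \<and> I a \<inter> span J = {} \<and> c \<in> weyl J \<and> w = a \<circ> c"
proof (induction "card (I w)" arbitrary: w rule: less_induct)
  case less
  show ?case
  proof (cases "I w \<inter> span J = {}")
    case True
    then show ?thesis using less.prems weyl_id by (intro exI[of _ w] exI[of _ id]) auto
  next
    case False
    then obtain \<delta> where d: "\<delta> \<in> J" "- w \<delta> \<in> P" using I_nonempty_simple[OF less.prems(1) J] by blast
    have dD: "\<delta> \<in> \<Delta>" using d J by auto
    have d0: "\<delta> \<noteq> 0" using dD zero_Delta by auto
    let ?w' = "w \<circ> refl \<delta>"
    have w': "?w' \<in> W" using weyl_comp[OF less.prems(1) weyl_refl[OF dD]] .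
    have c: "card (I ?w') < card (I w)" using card_I_snoc(2)[OF less.prems(1) dD d(2)] by simp
    obtain a c where ac: "a \<in> W" "I a \<inter> span J = {}" "c \<in> weyl J" "?w' = a \<circ> c"
      using less.hyps[OF c w'] by blast
    have "w = ?w' \<circ> refl \<delta>" by (rule ext) (simp add: refl_refl[OF d0])
    also have "\<dots> = a \<circ> (c \<circ> refl \<delta>)" using ac(4) by (simp add: comp_assoc)
    finally show ?thesis using ac weyl_comp[OF ac(3) weyl_refl[OF d(1)]] by blast
  qed
qed

lemma decomp_I:
  assumes a: "a \<in> W" "I a \<inter> span J = {}" and c: "c \<in> weyl J"
  shows "I (a \<circ> c) \<inter> span J = I c"
proof (intro equalityI subsetI)
  have cW: "c \<in> W" using WJ_W[OF c] .
  fix \<beta> assume "\<beta> \<in> I (a \<circ> c) \<inter> span J"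
  then have b: "\<beta> \<in> P" "\<beta> \<in> span J" "- a (c \<beta>) \<in> P" by (auto simp: I_iff)
  show "\<beta> \<in> I c"
  proof (rule ccontr)
    assume "\<beta> \<notin> I c"
    then have "c \<beta> \<in> P" using W_pos_cases[OF cW b(1)] b(1) by (auto simp: I_iff)
    moreover have "c \<beta> \<in> span J" using WJ_span[OF c b(2)] .
    ultimately have "c \<beta> \<notin> I a" using a(2) by blast
    then have "a (c \<beta>) \<in> P" using W_pos_cases[OF a(1) \<open>c \<beta> \<in> P\<close>] \<open>c \<beta> \<in> P\<close> by (auto simp: I_iff)
    then show False using b(3) not_both by blast
  qed
next
  have cW: "c \<in> W" using WJ_W[OF c] .
  fix \<beta> assume bc: "\<beta> \<in> I c"
  then have b: "\<beta> \<in> P" "- c \<beta> \<in> P" by (auto simp: I_iff)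
  have bs: "\<beta> \<in> span J" using WJ_I_span[OF c] bc by blast
  have "- c \<beta> \<in> span J" using WJ_span[OF c bs] span_neg by blast
  then have "- c \<beta> \<notin> I a" using a(2) by blast
  then have "a (- c \<beta>) \<in> P" using W_pos_cases[OF a(1) b(2)] b(2) by (auto simp: I_iff)
  then have "- a (c \<beta>) \<in> P" using W_neg[OF a(1)] by simp
  then show "\<beta> \<in> I (a \<circ> c) \<inter> span J" using b bs by (simp add: I_iff)
qed

lemma decomp_len:
  assumes a: "a \<in> W" "I a \<inter> span J = {}" and c: "c \<in> weyl J"
  shows "card (I (a \<circ> c)) = card (I a) + card (I c)"
proof -
  have "I a \<inter> N c = {}" using a(2) WJ_N_span[OF c] by blast
  then show ?thesis using len_additive_iff[OF a(1) WJ_W[OF c]] by simp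
qed

lemma decomp_unique:
  assumes a1: "a1 \<in> W" "I a1 \<inter> span J = {}" and c1: "c1 \<in> weyl J"
    and a2: "a2 \<in> W" "I a2 \<inter> span J = {}" and c2: "c2 \<in> weyl J"
    and e: "a1 \<circ> c1 = a2 \<circ> c2"
  shows "a1 = a2 \<and> c1 = c2"
proof -
  have c1W: "c1 \<in> W" and c2W: "c2 \<in> W" using WJ_W c1 c2 by auto
  define d where "d = c1 \<circ> inv c2"
  have d: "d \<in> weyl J" unfolding d_def using weyl_comp[OF c1 WJ_inv[OF c2]] .
  have di: "inv d \<in> weyl J" using WJ_inv[OF d] .
  have "a2 = a2 \<circ> (c2 \<circ> inv c2)" using W_inv[OF c2W] by simp
  also have "\<dots> = a1 \<circ> d" using e unfolding d_def by (simp add: comp_assoc[symmetric])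
  finally have e2: "a2 = a1 \<circ> d" .
  have "a1 \<circ> d \<circ> inv d = a1" using W_inv[OF WJ_W[OF d]] by (simp add: comp_assoc)
  then have e1: "a1 = a2 \<circ> inv d" using e2 by simp
  have "card (I a2) = card (I a1) + card (I d)" using e2 decomp_len[OF a1 d] by simp
  moreover have "card (I a1) = card (I a2) + card (I (inv d))" using e1 decomp_len[OF a2 di] by simp
  ultimately have "card (I d) = 0" by simp
  then have "I d = {}" using fin_I by simp
  then have "d = id" using I_empty_id[OF WJ_W[OF d]] by simp
  then have "c1 \<circ> inv c2 \<circ> c2 = c2" unfolding d_def by simp
  then have cc: "c1 = c2" using W_inv[OF c2W] by (simp add: comp_assoc)
  then have "a1 \<circ> c1 \<circ> inv c1 = a2 \<circ> c1 \<circ> inv c1" using e by simp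
  then have "a1 = a2" using W_inv[OF c1W] by (simp add: comp_assoc)
  with cc show ?thesis by simp
qed

end

end

context rs
begin

definition AJ :: "'a set \<Rightarrow> ('a \<Rightarrow> 'a) \<Rightarrow> ('a \<Rightarrow> 'a) set" where
  "AJ J u = {x \<in> weyl J. I x \<inter> N u = {}}"

definition BJ :: "'a set \<Rightarrow> ('a \<Rightarrow> 'a) \<Rightarrow> ('a \<Rightarrow> 'a) set" where
  "BJ J u = {y \<in> weyl J. N y \<subseteq> N u}"

lemma spl_AJ: "spl u \<longleftrightarrow> bij_betw (\<lambda>(x, y). x \<circ> y) (AJ \<Delta> u \<times> BJ \<Delta> u) W"
  by (simp add: spl_def AJ_def BJ_def Aset_def Bset_def)

lemma sub_spl_iff:
  assumes J: "J \<subseteq> \<Delta>" and u: "u \<in> weyl J"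
  shows "rs.spl (\<Phi> \<inter> span J) J u \<longleftrightarrow> bij_betw (\<lambda>(x, y). x \<circ> y) (AJ J u \<times> BJ J u) (weyl J)"
proof -
  interpret S: rs "\<Phi> \<inter> span J" J by (rule rs_sub[OF J])
  have ui: "inv u \<in> weyl J" using WJ_inv[OF J u] .
  have A: "S.Aset u = AJ J u"
    unfolding S.Aset_def AJ_def using I_sub_eq[OF J] ui by auto
  have B: "S.Bset u = BJ J u"
    unfolding S.Bset_def BJ_def using I_sub_eq[OF J] ui WJ_inv[OF J] by auto
  show ?thesis unfolding S.spl_def A B ..
qed

lemma bij_prodD:
  assumes "bij_betw (\<lambda>(x, y). x \<circ> y) (A \<times> B) C"
  shows "\<And>w. w \<in> C \<Longrightarrow> \<exists>x y. x \<in> A \<and> y \<in> B \<and> w = x \<circ> y"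
    and "\<And>x1 y1 x2 y2. x1 \<in> A \<Longrightarrow> y1 \<in> B \<Longrightarrow> x2 \<in> A \<Longrightarrow> y2 \<in> B \<Longrightarrow> x1 \<circ> y1 = x2 \<circ> y2 \<Longrightarrow> x1 = x2 \<and> y1 = y2"
proof -
  fix w assume "w \<in> C"
  then have "w \<in> (\<lambda>(x, y). x \<circ> y) ` (A \<times> B)" using assms by (simp add: bij_betw_def)
  then obtain p where "p \<in> A \<times> B" "w = (\<lambda>(x, y). x \<circ> y) p" by blast
  then show "\<exists>x y. x \<in> A \<and> y \<in> B \<and> w = x \<circ> y" by (cases p) auto
next
  fix x1 y1 x2 y2 assume m: "x1 \<in> A" "y1 \<in> B" "x2 \<in> A" "y2 \<in> B" and e: "x1 \<circ> y1 = x2 \<circ> y2"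
  have inj: "inj_on (\<lambda>(x, y). x \<circ> y) (A \<times> B)" using assms by (simp add: bij_betw_def)
  have "(x1, y1) = (x2, y2)" by (rule inj_onD[OF inj]) (use e m in auto)
  then show "x1 = x2 \<and> y1 = y2" by simp
qed

lemma bij_prodI:
  assumes "\<And>x y. x \<in> A \<Longrightarrow> y \<in> B \<Longrightarrow> x \<circ> y \<in> C"
    and "\<And>w. w \<in> C \<Longrightarrow> \<exists>x y. x \<in> A \<and> y \<in> B \<and> w = x \<circ> y"
    and "\<And>x1 y1 x2 y2. x1 \<in> A \<Longrightarrow> y1 \<in> B \<Longrightarrow> x2 \<in> A \<Longrightarrow> y2 \<in> B \<Longrightarrow> x1 \<circ> y1 = x2 \<circ> y2 \<Longrightarrow> x1 = x2 \<and> y1 = y2"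
  shows "bij_betw (\<lambda>(x, y). x \<circ> y) (A \<times> B) C"
  unfolding bij_betw_def
proof
  show "inj_on (\<lambda>(x, y). x \<circ> y) (A \<times> B)" using assms(3) by (auto intro!: inj_onI)
  show "(\<lambda>(x, y). x \<circ> y) ` (A \<times> B) = C"
  proof (intro equalityI subsetI)
    fix w assume "w \<in> (\<lambda>(x, y). x \<circ> y) ` (A \<times> B)" then show "w \<in> C" using assms(1) by auto
  next
    fix w assume "w \<in> C"
    then obtain x y where "x \<in> A" "y \<in> B" "w = x \<circ> y" using assms(2) by blast
    then show "w \<in> (\<lambda>(x, y). x \<circ> y) ` (A \<times> B)" by (metis (no_types, lifting) SigmaI case_prod_conv image_eqI)
  qed
qed

section \<open>Lifting from a parabolic subgroup\<close>

lemma lift: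
  assumes J: "J \<subseteq> \<Delta>" and u: "u \<in> weyl J" and s: "rs.spl (\<Phi> \<inter> span J) J u"
  shows "spl u"
proof -
  have sb: "bij_betw (\<lambda>(x, y). x \<circ> y) (AJ J u \<times> BJ J u) (weyl J)" using sub_spl_iff[OF J u] s by simp
  note S1 = bij_prodD(1)[OF sb] and S2 = bij_prodD(2)[OF sb]
  have uW: "u \<in> W" using WJ_W[OF J u] .
  have NuJ: "N u \<subseteq> span J" using WJ_N_span[OF J u] .
  have B: "BJ \<Delta> u = BJ J u"
  proof (intro equalityI subsetI)
    fix y assume "y \<in> BJ \<Delta> u"
    then have y: "y \<in> W" "N y \<subseteq> N u" by (auto simp: BJ_def)
    then have "inv y \<in> weyl J" using I_span_WJ[OF J W_inv_in[OF y(1)]] NuJ by blast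
    then have "inv (inv y) \<in> weyl J" using WJ_inv[OF J] by blast
    then show "y \<in> BJ J u" using y W_inv_inv by (auto simp: BJ_def)
  next
    fix y assume "y \<in> BJ J u" then show "y \<in> BJ \<Delta> u" using WJ_W[OF J] by (auto simp: BJ_def)
  qed
  have Ax: "I (a \<circ> c) \<inter> N u = I c \<inter> N u" if "a \<in> W" "I a \<inter> span J = {}" "c \<in> weyl J" for a c
    using decomp_I[OF J that] NuJ by blast
  show ?thesis unfolding spl_AJ B
  proof (rule bij_prodI)
    fix x y assume "x \<in> AJ \<Delta> u" "y \<in> BJ J u"
    then show "x \<circ> y \<in> W" using WJ_W[OF J] weyl_comp by (auto simp: AJ_def BJ_def)
  next
    fix w assume w: "w \<in> W"
    obtain a c where ac: "a \<in> W" "I a \<inter> span J = {}" "c \<in> weyl J" "w = a \<circ> c"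
      using decomp_exists[OF J w] by blast
    obtain x y where xy: "x \<in> AJ J u" "y \<in> BJ J u" "c = x \<circ> y" using S1[OF ac(3)] by blast
    have xJ: "x \<in> weyl J" using xy by (simp add: AJ_def)
    have "a \<circ> x \<in> AJ \<Delta> u"
      using Ax[OF ac(1,2) xJ] xy(1) weyl_comp[OF ac(1) WJ_W[OF J xJ]] by (auto simp: AJ_def)
    moreover have "w = (a \<circ> x) \<circ> y" using ac(4) xy(3) by (simp add: comp_assoc)
    ultimately show "\<exists>x y. x \<in> AJ \<Delta> u \<and> y \<in> BJ J u \<and> w = x \<circ> y" using xy(2) by blast
  next
    fix x1 y1 x2 y2
    assume m: "x1 \<in> AJ \<Delta> u" "y1 \<in> BJ J u" "x2 \<in> AJ \<Delta> u" "y2 \<in> BJ J u" and e: "x1 \<circ> y1 = x2 \<circ> y2"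
    have xW: "x1 \<in> W" "x2 \<in> W" and yJ: "y1 \<in> weyl J" "y2 \<in> weyl J" using m by (auto simp: AJ_def BJ_def)
    obtain a1 c1 where d1: "a1 \<in> W" "I a1 \<inter> span J = {}" "c1 \<in> weyl J" "x1 = a1 \<circ> c1"
      using decomp_exists[OF J xW(1)] by blast
    obtain a2 c2 where d2: "a2 \<in> W" "I a2 \<inter> span J = {}" "c2 \<in> weyl J" "x2 = a2 \<circ> c2"
      using decomp_exists[OF J xW(2)] by blast
    have cA1: "c1 \<in> AJ J u" using m(1) Ax[OF d1(1-3)] d1 by (auto simp: AJ_def)
    have cA2: "c2 \<in> AJ J u" using m(3) Ax[OF d2(1-3)] d2 by (auto simp: AJ_def)
    have "a1 \<circ> (c1 \<circ> y1) = a2 \<circ> (c2 \<circ> y2)" using e d1(4) d2(4) by (simp add: comp_assoc)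
    then have "a1 = a2 \<and> c1 \<circ> y1 = c2 \<circ> y2"
      using decomp_unique[OF J d1(1,2) weyl_comp[OF d1(3) yJ(1)] d2(1,2) weyl_comp[OF d2(3) yJ(2)]] by blast
    then have "a1 = a2" "c1 = c2 \<and> y1 = y2" using S2[OF cA1 m(2) cA2 m(4)] by auto
    then show "x1 = x2 \<and> y1 = y2" using d1(4) d2(4) by simp
  qed
qed

section \<open>Products\<close>

context
  fixes J1 J2
  assumes J1: "J1 \<subseteq> \<Delta>" and J2: "J2 \<subseteq> \<Delta>"
    and orth: "\<And>a b. a \<in> J1 \<Longrightarrow> b \<in> J2 \<Longrightarrow> a \<bullet> b = 0"
    and cover: "\<Phi> \<subseteq> span J1 \<union> span J2"
begin

lemma span_orth: "x \<in> span J1 \<Longrightarrow> y \<in> span J2 \<Longrightarrow> x \<bullet> y = 0"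
proof -
  assume x: "x \<in> span J1" and y: "y \<in> span J2"
  have "orthogonal a y" if "a \<in> J1" for a
    using orthogonal_to_span[OF y] orth[OF that] by (simp add: orthogonal_def)
  then have "orthogonal y x" using orthogonal_to_span[OF x] orthogonal_commute by blast
  then show ?thesis by (simp add: orthogonal_def inner_commute)
qed

lemma Phi_disj: "\<beta> \<in> \<Phi> \<Longrightarrow> \<beta> \<in> span J1 \<Longrightarrow> \<beta> \<in> span J2 \<Longrightarrow> False"
  using span_orth[of \<beta> \<beta>] zero_Phi by auto

lemma comm1: "w \<in> weyl J1 \<Longrightarrow> b \<in> J2 \<Longrightarrow> w \<circ> refl b = refl b \<circ> w"
proof (induction rule: weyl.induct)
  case weyl_id then show ?case by simp
next
  case (weyl_step a w)
  have IH: "w \<circ> refl b = refl b \<circ> w" using weyl_step.IH weyl_step.prems by blast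
  have ab: "refl a \<circ> refl b = refl b \<circ> refl a"
    by (rule ext) (simp add: refl_commute[OF orth[OF weyl_step.hyps(1) weyl_step.prems]])
  have "refl a \<circ> w \<circ> refl b = refl a \<circ> (w \<circ> refl b)" by (simp only: comp_assoc)
  also have "\<dots> = refl a \<circ> (refl b \<circ> w)" by (simp only: IH)
  also have "\<dots> = (refl a \<circ> refl b) \<circ> w" by (simp only: comp_assoc)
  also have "\<dots> = (refl b \<circ> refl a) \<circ> w" by (simp only: ab)
  also have "\<dots> = refl b \<circ> (refl a \<circ> w)" by (simp only: comp_assoc)
  finally show ?case .
qed

lemma comm: assumes c1: "c1 \<in> weyl J1" and c2: "c2 \<in> weyl J2" shows "c1 \<circ> c2 = c2 \<circ> c1"
  using c2
proof (induction rule: weyl.induct)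
  case weyl_id then show ?case by simp
next
  case (weyl_step b w)
  have IH: "c1 \<circ> w = w \<circ> c1" using weyl_step.IH .
  have "c1 \<circ> (refl b \<circ> w) = (c1 \<circ> refl b) \<circ> w" by (simp only: comp_assoc)
  also have "\<dots> = (refl b \<circ> c1) \<circ> w" by (simp only: comm1[OF c1 weyl_step.hyps(1)])
  also have "\<dots> = refl b \<circ> (c1 \<circ> w)" by (simp only: comp_assoc)
  also have "\<dots> = refl b \<circ> (w \<circ> c1)" by (simp only: IH)
  also have "\<dots> = refl b \<circ> w \<circ> c1" by (simp only: comp_assoc)
  finally show ?case .
qed

lemma I_W2_disj: "c \<in> weyl J2 \<Longrightarrow> I c \<inter> span J1 = {}"
  using WJ_I_span[OF J2] Phi_disj I_sub pos_sub by blast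

lemma I_W1_disj: "c \<in> weyl J1 \<Longrightarrow> I c \<inter> span J2 = {}"
  using WJ_I_span[OF J1] Phi_disj I_sub pos_sub by blast

lemma I_prod: assumes c1: "c1 \<in> weyl J1" and c2: "c2 \<in> weyl J2"
  shows "I (c1 \<circ> c2) = I c1 \<union> I c2"
proof -
  have a: "I (c1 \<circ> c2) \<inter> span J2 = I c2"
    using decomp_I[OF J2 WJ_W[OF J1 c1] I_W1_disj[OF c1] c2] .
  have b: "I (c1 \<circ> c2) \<inter> span J1 = I c1"
    using decomp_I[OF J1 WJ_W[OF J2 c2] I_W2_disj[OF c2] c1] comm[OF c1 c2] by simp
  have "I (c1 \<circ> c2) \<subseteq> span J1 \<union> span J2" using cover I_sub pos_sub by blast
  then show ?thesis using a b by blast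
qed

lemma N_prod: assumes c1: "c1 \<in> weyl J1" and c2: "c2 \<in> weyl J2"
  shows "N (c1 \<circ> c2) = N c1 \<union> N c2"
proof -
  have "inv (c1 \<circ> c2) = inv c2 \<circ> inv c1" using W_inv_comp WJ_W J1 J2 c1 c2 by blast
  also have "\<dots> = inv c1 \<circ> inv c2" using comm[OF WJ_inv[OF J1 c1] WJ_inv[OF J2 c2]] by simp
  finally show ?thesis using I_prod[OF WJ_inv[OF J1 c1] WJ_inv[OF J2 c2]] by simp
qed

lemma prod_decomp: "w \<in> W \<Longrightarrow> \<exists>c1 c2. c1 \<in> weyl J1 \<and> c2 \<in> weyl J2 \<and> w = c1 \<circ> c2"
proof -
  assume w: "w \<in> W"
  obtain a c where ac: "a \<in> W" "I a \<inter> span J2 = {}" "c \<in> weyl J2" "w = a \<circ> c"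
    using decomp_exists[OF J2 w] by blast
  have "I a \<subseteq> span J1" using ac(2) cover I_sub pos_sub by blast
  then have "a \<in> weyl J1" using I_span_WJ[OF J1 ac(1)] by blast
  then show ?thesis using ac by blast
qed

lemma prod_unique:
  "c1 \<in> weyl J1 \<Longrightarrow> c2 \<in> weyl J2 \<Longrightarrow> d1 \<in> weyl J1 \<Longrightarrow> d2 \<in> weyl J2 \<Longrightarrow> c1 \<circ> c2 = d1 \<circ> d2
    \<Longrightarrow> c1 = d1 \<and> c2 = d2"
  using decomp_unique[OF J2] WJ_W[OF J1] I_W1_disj by blast

lemma product:
  assumes u1: "u1 \<in> weyl J1" and u2: "u2 \<in> weyl J2"
    and s1: "rs.spl (\<Phi> \<inter> span J1) J1 u1" and s2: "rs.spl (\<Phi> \<inter> span J2) J2 u2"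
  shows "spl (u1 \<circ> u2)"
proof -
  have sb1: "bij_betw (\<lambda>(x, y). x \<circ> y) (AJ J1 u1 \<times> BJ J1 u1) (weyl J1)" using sub_spl_iff[OF J1 u1] s1 by simp
  have sb2: "bij_betw (\<lambda>(x, y). x \<circ> y) (AJ J2 u2 \<times> BJ J2 u2) (weyl J2)" using sub_spl_iff[OF J2 u2] s2 by simp
  note S1 = bij_prodD[OF sb1] and S2 = bij_prodD[OF sb2]
  let ?u = "u1 \<circ> u2"
  have Nu: "N ?u = N u1 \<union> N u2" using N_prod[OF u1 u2] .
  have N1: "N u1 \<subseteq> span J1" and N2: "N u2 \<subseteq> span J2" using WJ_N_span J1 J2 u1 u2 by auto
  have disj: "X \<inter> Y = {}" if "X \<subseteq> \<Phi>" "X \<subseteq> span J1" "Y \<subseteq> span J2" for X Y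
    using that Phi_disj by blast
  have IP: "I w \<subseteq> \<Phi>" for w using I_sub pos_sub by blast
  have A: "c1 \<circ> c2 \<in> AJ \<Delta> ?u \<longleftrightarrow> c1 \<in> AJ J1 u1 \<and> c2 \<in> AJ J2 u2"
    if c: "c1 \<in> weyl J1" "c2 \<in> weyl J2" for c1 c2
  proof -
    have "I c1 \<inter> N u2 = {}" using disj[OF IP WJ_I_span[OF J1 c(1)] N2] .
    moreover have "I c2 \<inter> N u1 = {}" using disj[OF IP N1 WJ_I_span[OF J2 c(2)]] by blast
    moreover have "c1 \<circ> c2 \<in> W" using weyl_comp[OF WJ_W[OF J1 c(1)] WJ_W[OF J2 c(2)]] .
    ultimately show ?thesis using I_prod[OF c] Nu c WJ_W[OF J1] WJ_W[OF J2]
      by (auto simp: AJ_def)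
  qed
  have B: "c1 \<circ> c2 \<in> BJ \<Delta> ?u \<longleftrightarrow> c1 \<in> BJ J1 u1 \<and> c2 \<in> BJ J2 u2"
    if c: "c1 \<in> weyl J1" "c2 \<in> weyl J2" for c1 c2
  proof -
    have "N c1 \<inter> N u2 = {}" using disj[OF IP WJ_N_span[OF J1 c(1)] N2] .
    moreover have "N c2 \<inter> N u1 = {}" using disj[OF IP N1 WJ_N_span[OF J2 c(2)]] by blast
    moreover have "c1 \<circ> c2 \<in> W" using weyl_comp[OF WJ_W[OF J1 c(1)] WJ_W[OF J2 c(2)]] .
    ultimately show ?thesis using N_prod[OF c] Nu c WJ_W[OF J1] WJ_W[OF J2]
      by (auto simp: BJ_def)
  qed
  show ?thesis unfolding spl_AJ
  proof (rule bij_prodI)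
    fix x y assume "x \<in> AJ \<Delta> ?u" "y \<in> BJ \<Delta> ?u"
    then show "x \<circ> y \<in> W" using weyl_comp by (auto simp: AJ_def BJ_def)
  next
    fix w assume w: "w \<in> W"
    obtain w1 w2 where ww: "w1 \<in> weyl J1" "w2 \<in> weyl J2" "w = w1 \<circ> w2" using prod_decomp[OF w] by blast
    obtain x1 y1 where xy1: "x1 \<in> AJ J1 u1" "y1 \<in> BJ J1 u1" "w1 = x1 \<circ> y1" using S1(1)[OF ww(1)] by blast
    obtain x2 y2 where xy2: "x2 \<in> AJ J2 u2" "y2 \<in> BJ J2 u2" "w2 = x2 \<circ> y2" using S2(1)[OF ww(2)] by blast
    have c: "x1 \<in> weyl J1" "y1 \<in> weyl J1" "x2 \<in> weyl J2" "y2 \<in> weyl J2"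
      using xy1 xy2 by (auto simp: AJ_def BJ_def)
    have "w = x1 \<circ> (y1 \<circ> x2) \<circ> y2" using ww(3) xy1(3) xy2(3) by (simp add: comp_assoc)
    also have "y1 \<circ> x2 = x2 \<circ> y1" using comm[OF c(2,3)] .
    finally have "w = (x1 \<circ> x2) \<circ> (y1 \<circ> y2)" by (simp only: comp_assoc)
    moreover have "x1 \<circ> x2 \<in> AJ \<Delta> ?u" using A[OF c(1,3)] xy1 xy2 by simp
    moreover have "y1 \<circ> y2 \<in> BJ \<Delta> ?u" using B[OF c(2,4)] xy1 xy2 by simp
    ultimately show "\<exists>x y. x \<in> AJ \<Delta> ?u \<and> y \<in> BJ \<Delta> ?u \<and> w = x \<circ> y" by blast
  next
    fix x y x' y'
    assume m: "x \<in> AJ \<Delta> ?u" "y \<in> BJ \<Delta> ?u" "x' \<in> AJ \<Delta> ?u" "y' \<in> BJ \<Delta> ?u" and e: "x \<circ> y = x' \<circ> y'"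
    have W': "x \<in> W" "y \<in> W" "x' \<in> W" "y' \<in> W" using m by (auto simp: AJ_def BJ_def)
    obtain x1 x2 where dx: "x1 \<in> weyl J1" "x2 \<in> weyl J2" "x = x1 \<circ> x2" using prod_decomp[OF W'(1)] by blast
    obtain y1 y2 where dy: "y1 \<in> weyl J1" "y2 \<in> weyl J2" "y = y1 \<circ> y2" using prod_decomp[OF W'(2)] by blast
    obtain x1' x2' where dx': "x1' \<in> weyl J1" "x2' \<in> weyl J2" "x' = x1' \<circ> x2'" using prod_decomp[OF W'(3)] by blast
    obtain y1' y2' where dy': "y1' \<in> weyl J1" "y2' \<in> weyl J2" "y' = y1' \<circ> y2'" using prod_decomp[OF W'(4)] by blast
    have mA: "x1 \<in> AJ J1 u1" "x2 \<in> AJ J2 u2" "x1' \<in> AJ J1 u1" "x2' \<in> AJ J2 u2"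
      using A[OF dx(1,2)] A[OF dx'(1,2)] m dx dx' by auto
    have mB: "y1 \<in> BJ J1 u1" "y2 \<in> BJ J2 u2" "y1' \<in> BJ J1 u1" "y2' \<in> BJ J2 u2"
      using B[OF dy(1,2)] B[OF dy'(1,2)] m dy dy' by auto
    have r: "x1 \<circ> x2 \<circ> (y1 \<circ> y2) = (x1 \<circ> y1) \<circ> (x2 \<circ> y2)" if "x2 \<in> weyl J2" "y1 \<in> weyl J1" for x1 x2 y1 y2
    proof -
      have "x1 \<circ> x2 \<circ> (y1 \<circ> y2) = x1 \<circ> (x2 \<circ> y1) \<circ> y2" by (simp add: comp_assoc)
      also have "x2 \<circ> y1 = y1 \<circ> x2" using comm[OF that(2,1)] by simp
      finally show ?thesis by (simp only: comp_assoc)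
    qed
    have e1: "x \<circ> y = (x1 \<circ> y1) \<circ> (x2 \<circ> y2)" unfolding dx(3) dy(3) by (rule r[OF dx(2) dy(1)])
    have e2: "x' \<circ> y' = (x1' \<circ> y1') \<circ> (x2' \<circ> y2')" unfolding dx'(3) dy'(3) by (rule r[OF dx'(2) dy'(1)])
    have "(x1 \<circ> y1) \<circ> (x2 \<circ> y2) = (x1' \<circ> y1') \<circ> (x2' \<circ> y2')"
      using e e1 e2 by simp
    then have "x1 \<circ> y1 = x1' \<circ> y1' \<and> x2 \<circ> y2 = x2' \<circ> y2'"
      by (rule prod_unique[rotated 4]) (use dx dy dx' dy' weyl_comp in auto)
    then have "x1 = x1' \<and> y1 = y1'" "x2 = x2' \<and> y2 = y2'"
      using S1(2)[OF mA(1) mB(1) mA(3) mB(3)] S2(2)[OF mA(2) mB(2) mA(4) mB(4)] by auto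
    then show "x = x' \<and> y = y'" using dx dy dx' dy' by simp
  qed
qed

end

end

lemma weyl_empty: "weyl {} = {id}"
proof (intro equalityI subsetI)
  fix w assume "w \<in> weyl {}" then show "w \<in> {id}" by (induction rule: weyl.induct) auto
qed (auto intro: weyl_id)

context rs
begin

lemma spl_empty: assumes "\<Delta> = {}" shows "spl id"
proof -
  have W: "W = {id}" using assms weyl_empty by simp
  have A: "Aset id = {id}" using W I_id by (auto simp: Aset_def)
  have B: "Bset id = {id}" using W by (auto simp: Bset_def)
  show ?thesis unfolding spl_def A B W by (simp add: bij_betw_def)
qed

lemma rootle_eq: assumes a: "\<alpha> \<in> \<Delta>"
  shows "{\<beta> \<in> P. root_le \<Delta> \<alpha> \<beta>} = P - span (\<Delta> - {\<alpha>})"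
proof (intro equalityI subsetI)
  let ?J = "\<Delta> - {\<alpha>}"
  have J: "?J \<subseteq> \<Delta>" by auto
  fix \<beta> assume "\<beta> \<in> {\<beta> \<in> P. root_le \<Delta> \<alpha> \<beta>}"
  then have b: "\<beta> \<in> P" "nonneg_comb \<Delta> (\<beta> - \<alpha>)" by (auto simp: root_le_def)
  have bs: "\<beta> \<in> span \<Delta>" using b pos_sub Phi_span by auto
  have as: "\<alpha> \<in> span \<Delta>" using a by (simp add: span_base)
  have "cf (\<beta> - \<alpha>) \<alpha> \<ge> 0" using nonneg_comb_cf[OF b(2) a] .
  then have "cf \<beta> \<alpha> \<ge> 1" using cf_diff[OF bs as] cf_basis[OF a] by simp
  moreover have "\<beta> \<in> span ?J \<Longrightarrow> cf \<beta> \<alpha> = 0" using rep_J(2)[OF J] by blast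
  ultimately show "\<beta> \<in> P - span ?J" using b by auto
next
  let ?J = "\<Delta> - {\<alpha>}"
  fix \<beta> assume "\<beta> \<in> P - span ?J"
  then have b: "\<beta> \<in> P" "\<beta> \<notin> span ?J" by auto
  have bPhi: "\<beta> \<in> \<Phi>" using b pos_sub by auto
  have "cf \<beta> \<alpha> \<noteq> 0" using rs.not_span_cf[OF rs_axioms _ bPhi b(2)] by auto
  obtain c where c: "\<beta> = (\<Sum>\<delta>\<in>\<Delta>. real (c \<delta>) *\<^sub>R \<delta>)" using b by (auto simp: pos_roots_def nonneg_comb_def)
  have ca: "real (c \<alpha>) = cf \<beta> \<alpha>" using coef_sum[OF fin_Delta ind c a] by simp
  then have c1: "c \<alpha> \<ge> 1" using \<open>cf \<beta> \<alpha> \<noteq> 0\<close> by simp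
  let ?c = "c(\<alpha> := c \<alpha> - 1)"
  have "(\<Sum>\<delta>\<in>\<Delta>. real (?c \<delta>) *\<^sub>R \<delta>) = real (?c \<alpha>) *\<^sub>R \<alpha> + (\<Sum>\<delta>\<in>\<Delta> - {\<alpha>}. real (?c \<delta>) *\<^sub>R \<delta>)"
    by (rule sum.remove[OF fin_Delta a])
  also have "\<dots> = (real (c \<alpha>) *\<^sub>R \<alpha> + (\<Sum>\<delta>\<in>\<Delta> - {\<alpha>}. real (c \<delta>) *\<^sub>R \<delta>)) - \<alpha>"
    using c1 by (simp add: of_nat_diff algebra_simps)
  also have "\<dots> = \<beta> - \<alpha>" unfolding c by (simp add: sum.remove[OF fin_Delta a])
  finally have "nonneg_comb \<Delta> (\<beta> - \<alpha>)" unfolding nonneg_comb_def by (metis (no_types))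
  then show "\<beta> \<in> {\<beta> \<in> P. root_le \<Delta> \<alpha> \<beta>}" using b by (simp add: root_le_def)
qed

lemma step:
  assumes J: "J \<subseteq> \<Delta>" and u: "u \<in> W"
    and cond: "I u \<subseteq> span J \<or> P - span J \<subseteq> I u"
    and hyp: "\<And>v. v \<in> weyl J \<Longrightarrow> inv_set (\<Phi> \<inter> span J) J v = I u \<inter> span J \<Longrightarrow> rs.spl (\<Phi> \<inter> span J) J v"
  shows "spl u"
proof -
  interpret S: rs "\<Phi> \<inter> span J" J by (rule rs_sub[OF J])
  show ?thesis
  proof (cases "I u \<subseteq> span J")
    case True
    then have uJ: "u \<in> weyl J" using I_span_WJ[OF J u] by blast
    have "inv_set (\<Phi> \<inter> span J) J u = I u \<inter> span J" using I_sub_eq[OF J uJ] True by blast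
    then show ?thesis using lift[OF J uJ hyp[OF uJ]] by simp
  next
    case False
    then have c: "P - span J \<subseteq> I u" using cond by blast
    let ?z = "w0 \<circ> u"
    have zW: "?z \<in> W" using weyl_comp[OF w0(1) u] .
    have Iz: "I ?z = P - I u" using I_w0_comp[OF u] .
    then have "I ?z \<subseteq> span J" using c by blast
    then have zJ: "?z \<in> weyl J" using I_span_WJ[OF J zW] by blast
    let ?v = "S.w0 \<circ> ?z"
    have vJ: "?v \<in> weyl J" using weyl_comp[OF S.w0(1) zJ] .
    have "S.I ?v = S.P - S.I ?z" using S.I_w0_comp[OF zJ] .
    also have "S.P = P \<inter> span J" using pos_sub_eq[OF J] .
    also have "S.I ?z = P - I u" using I_sub_eq[OF J zJ] Iz by simp
    finally have "S.I ?v = I u \<inter> span J" using I_sub by blast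
    then have sv: "S.spl ?v" using hyp[OF vJ] by simp
    have "S.spl (S.w0 \<circ> ?v)" using S.spl_w0[OF vJ sv] .
    moreover have "S.w0 \<circ> ?v = ?z" using S.w0_w0 by (simp add: comp_assoc[symmetric])
    ultimately have "S.spl ?z" by simp
    then have "spl ?z" using lift[OF J zJ] by simp
    then have "spl (w0 \<circ> ?z)" using spl_w0[OF zW] by simp
    moreover have "w0 \<circ> ?z = u" using w0_w0 by (simp add: comp_assoc[symmetric])
    ultimately show ?thesis by simp
  qed
qed

end

lemma span_orth_sets:
  fixes A B :: "'a::euclidean_space set"
  assumes o: "\<And>a b. a \<in> A \<Longrightarrow> b \<in> B \<Longrightarrow> a \<bullet> b = 0" and x: "x \<in> span A" and y: "y \<in> span B"
  shows "x \<bullet> y = 0"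
proof -
  have "orthogonal a y" if "a \<in> A" for a
    using orthogonal_to_span[OF y] o[OF that] by (simp add: orthogonal_def)
  then have "orthogonal y x" using orthogonal_to_span[OF x] orthogonal_commute by blast
  then show ?thesis by (simp add: orthogonal_def inner_commute)
qed

lemma span_eq_of: "A \<subseteq> B \<Longrightarrow> B \<subseteq> span A \<Longrightarrow> span B = span A"
  by (metis span_mono span_span subset_antisym)

lemma exists_component:
  fixes \<Phi> :: "'a::euclidean_space set"
  assumes fin: "finite \<Phi>" and z: "0 \<notin> \<Phi>" and red: "reducible_rs \<Phi>"
  shows "\<exists>C. component \<Phi> C"
proof -
  let ?S = "\<lambda>C. C \<subseteq> \<Phi> \<and> C \<noteq> {} \<and> (\<forall>a\<in>C. \<forall>b\<in>\<Phi> - C. a \<bullet> b = 0)"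
  have "?S \<Phi>" using red by (auto simp: reducible_rs_def)
  then obtain C where C: "?S C" and mn: "\<And>D. ?S D \<Longrightarrow> card C \<le> card D"
    using ex_has_least_nat[of ?S \<Phi> card] by blast
  have "irreducible_rs C"
    unfolding irreducible_rs_def
  proof (intro conjI)
    show "C \<noteq> {}" using C by blast
  next
    show "\<not> (\<exists>A B. A \<noteq> {} \<and> B \<noteq> {} \<and> A \<union> B = C \<and> (\<forall>a\<in>A. \<forall>b\<in>B. a \<bullet> b = 0))"
    proof
    assume "\<exists>A B. A \<noteq> {} \<and> B \<noteq> {} \<and> A \<union> B = C \<and> (\<forall>a\<in>A. \<forall>b\<in>B. a \<bullet> b = 0)"
    then obtain A B where AB: "A \<noteq> {}" "B \<noteq> {}" "A \<union> B = C" "\<forall>a\<in>A. \<forall>b\<in>B. a \<bullet> b = 0" by blast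
    have SA: "?S A"
    proof (intro conjI ballI)
      show "A \<subseteq> \<Phi>" "A \<noteq> {}" using AB C by auto
    next
      fix a b assume a: "a \<in> A" and b: "b \<in> \<Phi> - A"
      show "a \<bullet> b = 0"
      proof (cases "b \<in> C")
        case True then have "b \<in> B" using b AB by auto
        then show ?thesis using AB a by auto
      next
        case False then show ?thesis using C a b AB by auto
      qed
    qed
    have "A \<noteq> C"
    proof
      assume "A = C"
      then obtain b where b: "b \<in> B" "b \<in> A" using AB by auto
      then have "b \<bullet> b = 0" using AB by auto
      then have "b = 0" by simp
      then show False using b C z AB by auto
    qed
    then have "A \<subset> C" using AB by auto
    then have "card A < card C" using C fin by (meson finite_subset psubset_card_mono)
    then show False using mn[OF SA] by simp
    qed
  qed
  then show ?thesis using C unfolding component_def by blast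
qed

context rs
begin

lemma cf_sum_scale:
  assumes fin: "finite S" and sp: "\<And>i. i \<in> S \<Longrightarrow> x i \<in> span \<Delta>"
  shows "cf (\<Sum>i\<in>S. c i *\<^sub>R x i) \<delta> = (\<Sum>i\<in>S. c i * cf (x i) \<delta>)"
  using fin sp
proof (induction S rule: finite_induct)
  case empty then show ?case by (simp add: representation_zero)
next
  case (insert j S)
  have "cf (c j *\<^sub>R x j + (\<Sum>i\<in>S. c i *\<^sub>R x i)) \<delta> = cf (c j *\<^sub>R x j) \<delta> + cf (\<Sum>i\<in>S. c i *\<^sub>R x i) \<delta>"
    using insert.prems by (intro cf_add) (auto intro!: span_sum span_scale)
  then show ?case using insert by (simp add: cf_scale)
qed

end

lemma simple_unique:
  assumes R1: "rs \<Psi> D1" and R2: "rs \<Psi> D2" and eq: "pos_roots \<Psi> D1 = pos_roots \<Psi> D2"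
  shows "D1 \<subseteq> D2"
proof
  interpret A: rs \<Psi> D1 by (rule R1)
  interpret B: rs \<Psi> D2 by (rule R2)
  fix \<delta> assume d: "\<delta> \<in> D1"
  have "\<delta> \<in> B.P" using A.simple_pos[OF d] eq by simp
  then obtain c where c: "\<delta> = (\<Sum>\<gamma>\<in>D2. real (c \<gamma>) *\<^sub>R \<gamma>)" by (auto simp: pos_roots_def nonneg_comb_def)
  have gP: "\<gamma> \<in> A.P" if "\<gamma> \<in> D2" for \<gamma> using B.simple_pos[OF that] eq by simp
  have gs: "\<gamma> \<in> span D1" if "\<gamma> \<in> D2" for \<gamma> using gP[OF that] A.pos_sub A.Phi_span by blast
  have cfd: "A.cf \<delta> \<epsilon> = (\<Sum>\<gamma>\<in>D2. real (c \<gamma>) * A.cf \<gamma> \<epsilon>)" for \<epsilon>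
    using A.cf_sum_scale[OF B.fin_Delta gs] c by simp
  obtain \<gamma>0 where g0: "\<gamma>0 \<in> D2" "c \<gamma>0 \<noteq> 0"
  proof (rule ccontr)
    assume "\<not> thesis"
    then have "\<And>\<gamma>. \<gamma> \<in> D2 \<Longrightarrow> c \<gamma> = 0" using that by blast
    then have "\<delta> = 0" using c by simp
    then show False using d A.zero_Delta by simp
  qed
  have z: "A.cf \<gamma>0 \<epsilon> = 0" if e: "\<epsilon> \<in> D1" "\<epsilon> \<noteq> \<delta>" for \<epsilon>
  proof -
    have nn: "\<And>\<gamma>. \<gamma> \<in> D2 \<Longrightarrow> 0 \<le> real (c \<gamma>) * A.cf \<gamma> \<epsilon>" using A.posD[OF gP e(1)] by simp
    have "(\<Sum>\<gamma>\<in>D2. real (c \<gamma>) * A.cf \<gamma> \<epsilon>) = 0" using cfd[of \<epsilon>] A.cf_basis[OF d] e by simp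
    then have "real (c \<gamma>0) * A.cf \<gamma>0 \<epsilon> = 0"
      using sum_nonneg_eq_0_iff[OF B.fin_Delta, of "\<lambda>\<gamma>. real (c \<gamma>) * A.cf \<gamma> \<epsilon>"] nn g0(1) by auto
    then show ?thesis using g0(2) by simp
  qed
  have g0s: "\<gamma>0 \<in> span D1" using gs[OF g0(1)] .
  have "\<gamma>0 = (\<Sum>\<epsilon>\<in>D1. A.cf \<gamma>0 \<epsilon> *\<^sub>R \<epsilon>)" using A.span_expand[OF g0s] .
  also have "\<dots> = A.cf \<gamma>0 \<delta> *\<^sub>R \<delta>"
    by (rule sum.remove[OF A.fin_Delta d, THEN trans]) (simp add: z)
  finally have e: "\<gamma>0 = A.cf \<gamma>0 \<delta> *\<^sub>R \<delta>" .
  have m: "A.cf \<gamma>0 \<delta> *\<^sub>R \<delta> \<in> \<Psi>" using gP[OF g0(1)] A.pos_sub e by auto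
  have "A.cf \<gamma>0 \<delta> = 1 \<or> A.cf \<gamma>0 \<delta> = -1"
    using A.reduced[OF _ m] A.Delta_sub d by auto
  moreover have "A.cf \<gamma>0 \<delta> \<ge> 0" using A.posD[OF gP[OF g0(1)] d] .
  ultimately have "\<gamma>0 = \<delta>" using e by auto
  then show "\<delta> \<in> D2" using g0 by simp
qed

context rs
begin

lemma uniq_simple:
  assumes "rs \<Psi> D" "simple_system \<Psi> D'" "pos_roots \<Psi> D' = pos_roots \<Psi> D"
  shows "D' = D"
proof -
  have "rs \<Psi> D'" using assms(1,2) rs.RS by (simp add: rs_def)
  then show ?thesis using simple_unique[OF _ assms(1)] simple_unique[OF assms(1)] assms(3) by blast
qed

lemma case_S2:
  assumes red: "reducible_rs \<Phi>"
    and compH: "\<And>C. component \<Phi> C \<Longrightarrow> \<exists>\<Delta>'. simple_system (\<Phi> \<inter> span C) \<Delta>'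
        \<and> pos_roots (\<Phi> \<inter> span C) \<Delta>' = P \<inter> span C \<and> sep (\<Phi> \<inter> span C) \<Delta>' (I u \<inter> span C)"
    and u: "u \<in> W"
    and IH: "\<And>(\<Phi>' :: 'a set) \<Delta>' u'. card \<Phi>' < card \<Phi> \<Longrightarrow> rs \<Phi>' \<Delta>' \<Longrightarrow> u' \<in> weyl \<Delta>'
        \<Longrightarrow> sep \<Phi>' \<Delta>' (inv_set \<Phi>' \<Delta>' u') \<Longrightarrow> rs.spl \<Phi>' \<Delta>' u'"
  shows "spl u"
proof -
  obtain C where C: "component \<Phi> C" using exists_component fin_Phi zero_Phi red by blast
  have CPhi: "C \<subseteq> \<Phi>" and Cirr: "irreducible_rs C" and oC: "\<And>a b. a \<in> C \<Longrightarrow> b \<in> \<Phi> - C \<Longrightarrow> a \<bullet> b = 0"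
    using C by (auto simp: component_def)
  have Cne: "C \<noteq> {}" using Cirr by (simp add: irreducible_rs_def)
  have Dne: "\<Phi> - C \<noteq> {}"
  proof
    assume "\<Phi> - C = {}"
    then have "C = \<Phi>" using CPhi by auto
    then show False using Cirr red by (simp add: reducible_rs_def)
  qed
  define J1 where "J1 = \<Delta> \<inter> C"
  define J2 where "J2 = \<Delta> - C"
  have J1: "J1 \<subseteq> \<Delta>" and J2: "J2 \<subseteq> \<Delta>" by (auto simp: J1_def J2_def)
  have J1C: "J1 \<subseteq> C" and J2D: "J2 \<subseteq> \<Phi> - C" using Delta_sub by (auto simp: J1_def J2_def)
  have oJ: "\<And>a b. a \<in> J1 \<Longrightarrow> b \<in> J2 \<Longrightarrow> a \<bullet> b = 0" using oC J1C J2D by blast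
  have spo: "x \<bullet> y = 0" if "x \<in> span C" "y \<in> span (\<Phi> - C)" for x y
    using span_orth_sets[OF oC that] by blast
  have split: "\<exists>v1 v2. v1 \<in> span J1 \<and> v2 \<in> span J2 \<and> \<beta> = v1 + v2" if b: "\<beta> \<in> \<Phi>" for \<beta>
  proof -
    have "\<beta> = (\<Sum>\<delta>\<in>\<Delta>. cf \<beta> \<delta> *\<^sub>R \<delta>)" using span_expand Phi_span b by blast
    also have "\<dots> = (\<Sum>\<delta>\<in>J1. cf \<beta> \<delta> *\<^sub>R \<delta>) + (\<Sum>\<delta>\<in>J2. cf \<beta> \<delta> *\<^sub>R \<delta>)"
      unfolding J1_def J2_def by (rule sum.Int_Diff[OF fin_Delta])
    finally show ?thesis using sum_span by blast
  qed
  have inC: "\<beta> \<in> span J1" if b: "\<beta> \<in> C" for \<beta>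
  proof -
    obtain v1 v2 where v: "v1 \<in> span J1" "v2 \<in> span J2" "\<beta> = v1 + v2" using split CPhi b by blast
    have e: "v2 = \<beta> - v1" using v by simp
    have "\<beta> - v1 \<in> span C" using b span_base span_mono[OF J1C] v(1) span_diff by blast
    moreover have "v2 \<in> span (\<Phi> - C)" using v(2) span_mono[OF J2D] by blast
    ultimately have "v2 \<bullet> v2 = 0" using spo e by simp
    then show ?thesis using v by simp
  qed
  have inD: "\<beta> \<in> span J2" if b: "\<beta> \<in> \<Phi> - C" for \<beta>
  proof -
    obtain v1 v2 where v: "v1 \<in> span J1" "v2 \<in> span J2" "\<beta> = v1 + v2" using split b by blast
    have e: "v1 = \<beta> - v2" using v by simp
    have "\<beta> - v2 \<in> span (\<Phi> - C)" using b span_base span_mono[OF J2D] v(2) span_diff by blast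
    moreover have "v1 \<in> span C" using v(1) span_mono[OF J1C] by blast
    ultimately have "v1 \<bullet> v1 = 0" using spo e by simp
    then show ?thesis using v by simp
  qed
  have cover: "\<Phi> \<subseteq> span J1 \<union> span J2" using inC inD by blast
  have sJ: "x \<bullet> y = 0" if "x \<in> span J1" "y \<in> span J2" for x y using span_orth_sets[OF oJ that] .
  have PJ1: "\<Phi> \<inter> span J1 = C"
  proof (intro equalityI subsetI)
    fix \<beta> assume b: "\<beta> \<in> \<Phi> \<inter> span J1"
    show "\<beta> \<in> C"
    proof (rule ccontr)
      assume "\<beta> \<notin> C"
      then have "\<beta> \<in> span J2" using inD b by blast
      then have "\<beta> \<bullet> \<beta> = 0" using sJ b by blast
      then show False using b zero_Phi by auto
    qed
  qed (use inC CPhi in blast)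
  have PJ2: "\<Phi> \<inter> span J2 = \<Phi> - C"
  proof (intro equalityI subsetI)
    fix \<beta> assume b: "\<beta> \<in> \<Phi> \<inter> span J2"
    show "\<beta> \<in> \<Phi> - C"
    proof (rule ccontr)
      assume "\<beta> \<notin> \<Phi> - C"
      then have "\<beta> \<in> span J1" using inC b by blast
      then have "\<beta> \<bullet> \<beta> = 0" using sJ b by blast
      then show False using b zero_Phi by auto
    qed
  qed (use inD in blast)
  have spC: "span C = span J1" by (rule span_eq_of[OF J1C]) (use inC in blast)
  have spD: "span (\<Phi> - C) = span J2" by (rule span_eq_of[OF J2D]) (use inD in blast)
  have rs1: "rs C J1" using rs_sub[OF J1] PJ1 by simp
  have rs2: "rs (\<Phi> - C) J2" using rs_sub[OF J2] PJ2 by simp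
  have pos1: "pos_roots C J1 = P \<inter> span J1" using pos_sub_eq[OF J1] PJ1 by simp
  have pos2: "pos_roots (\<Phi> - C) J2 = P \<inter> span J2" using pos_sub_eq[OF J2] PJ2 by simp
  have sep1: "sep C J1 (I u \<inter> span J1)"
  proof -
    obtain D' where D': "simple_system (\<Phi> \<inter> span C) D'" "pos_roots (\<Phi> \<inter> span C) D' = P \<inter> span C"
      "sep (\<Phi> \<inter> span C) D' (I u \<inter> span C)" using compH[OF C] by blast
    have e: "\<Phi> \<inter> span C = C" using spC PJ1 by simp
    have "D' = J1" using uniq_simple[OF rs1] D' e spC pos1 by simp
    then show ?thesis using D' e spC by simp
  qed
  have sep2: "sep (\<Phi> - C) J2 (I u \<inter> span J2)"
  proof (cases "irreducible_rs (\<Phi> - C)")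
    case True
    have "component \<Phi> (\<Phi> - C)" unfolding component_def
    proof (intro conjI ballI)
      fix a b assume "a \<in> \<Phi> - C" "b \<in> \<Phi> - (\<Phi> - C)"
      then show "a \<bullet> b = 0" using oC[of b a] CPhi by (auto simp: inner_commute)
    qed (use True in auto)
    then obtain D' where D': "simple_system (\<Phi> \<inter> span (\<Phi> - C)) D'" "pos_roots (\<Phi> \<inter> span (\<Phi> - C)) D' = P \<inter> span (\<Phi> - C)"
      "sep (\<Phi> \<inter> span (\<Phi> - C)) D' (I u \<inter> span (\<Phi> - C))" using compH by blast
    have e: "\<Phi> \<inter> span (\<Phi> - C) = \<Phi> - C" using spD PJ2 by simp
    have "D' = J2" using uniq_simple[OF rs2] D' e spD pos2 by simp
    then show ?thesis using D' e spD by simp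
  next
    case False
    then have red2: "reducible_rs (\<Phi> - C)" using Dne by (simp add: reducible_rs_def)
    show ?thesis
    proof (rule sep.S2[OF red2])
      fix C' assume C': "component (\<Phi> - C) C'"
      have C'sub: "C' \<subseteq> \<Phi> - C" and C'irr: "irreducible_rs C'"
        and oC': "\<And>a b. a \<in> C' \<Longrightarrow> b \<in> (\<Phi> - C) - C' \<Longrightarrow> a \<bullet> b = 0"
        using C' by (auto simp: component_def)
      have "component \<Phi> C'" unfolding component_def
      proof (intro conjI ballI)
        fix a b assume a: "a \<in> C'" and b: "b \<in> \<Phi> - C'"
        show "a \<bullet> b = 0"
        proof (cases "b \<in> C")
          case True then show ?thesis using oC[of b a] a C'sub by (auto simp: inner_commute)
        next
          case False then show ?thesis using oC' a b by auto
        qed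
      qed (use C'sub C'irr in auto)
      then obtain D' where D': "simple_system (\<Phi> \<inter> span C') D'" "pos_roots (\<Phi> \<inter> span C') D' = P \<inter> span C'"
        "sep (\<Phi> \<inter> span C') D' (I u \<inter> span C')" using compH by blast
      have e1: "(\<Phi> - C) \<inter> span C' = \<Phi> \<inter> span C'"
      proof (intro equalityI subsetI)
        fix \<beta> assume b: "\<beta> \<in> \<Phi> \<inter> span C'"
        have "\<beta> \<notin> C"
        proof
          assume "\<beta> \<in> C"
          then have "\<beta> \<in> span C" by (simp add: span_base)
          moreover have "\<beta> \<in> span (\<Phi> - C)" using b span_mono[OF C'sub] by blast
          ultimately have "\<beta> \<bullet> \<beta> = 0" using spo by blast
          then show False using b zero_Phi by auto
        qed
        then show "\<beta> \<in> (\<Phi> - C) \<inter> span C'" using b by blast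
      qed auto
      have sC': "span C' \<subseteq> span J2" using span_mono[OF C'sub] spD by simp
      have e2: "pos_roots (\<Phi> - C) J2 \<inter> span C' = P \<inter> span C'" using pos2 sC' by blast
      have e3: "I u \<inter> span J2 \<inter> span C' = I u \<inter> span C'" using sC' by blast
      show "\<exists>\<Delta>'. simple_system ((\<Phi> - C) \<inter> span C') \<Delta>' \<and>
          pos_roots ((\<Phi> - C) \<inter> span C') \<Delta>' = pos_roots (\<Phi> - C) J2 \<inter> span C' \<and>
          sep ((\<Phi> - C) \<inter> span C') \<Delta>' (I u \<inter> span J2 \<inter> span C')"
        unfolding e1 e2 e3 using D' by blast
    qed
  qed
  obtain u1 u2 where uu: "u1 \<in> weyl J1" "u2 \<in> weyl J2" "u = u1 \<circ> u2"
    using prod_decomp[OF J1 J2 oJ cover u] by blast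
  have Iu: "I u = I u1 \<union> I u2" using I_prod[OF J1 J2 oJ cover uu(1,2)] uu(3) by simp
  have Iu1: "I u \<inter> span J1 = I u1"
    using Iu WJ_I_span[OF J1 uu(1)] I_W2_disj[OF J1 J2 oJ cover uu(2)] by blast
  have Iu2: "I u \<inter> span J2 = I u2"
    using Iu WJ_I_span[OF J2 uu(2)] I_W1_disj[OF J1 J2 oJ cover uu(1)] by blast
  have i1: "inv_set C J1 u1 = I u1" using I_sub_eq[OF J1 uu(1)] PJ1 by simp
  have i2: "inv_set (\<Phi> - C) J2 u2 = I u2" using I_sub_eq[OF J2 uu(2)] PJ2 by simp
  have "C \<subset> \<Phi>" using CPhi Dne by blast
  then have c1: "card C < card \<Phi>" by (rule psubset_card_mono[OF fin_Phi])
  have c2: "card (\<Phi> - C) < card \<Phi>" using CPhi Cne fin_Phi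
    by (metis Diff_subset Diff_disjoint Int_absorb2 psubsetI psubset_card_mono)
  have s1: "rs.spl C J1 u1" using IH[OF c1 rs1 uu(1)] sep1 i1 Iu1 by simp
  have s2: "rs.spl (\<Phi> - C) J2 u2" using IH[OF c2 rs2 uu(2)] sep2 i2 Iu2 by simp
  have "spl (u1 \<circ> u2)" using product[OF J1 J2 oJ cover uu(1,2)] s1 s2 PJ1 PJ2 by simp
  then show ?thesis using uu(3) by simp
qed

end

lemma main: "rs \<Phi> \<Delta> \<Longrightarrow> u \<in> weyl \<Delta> \<Longrightarrow> sep \<Phi> \<Delta> (inv_set \<Phi> \<Delta> u) \<Longrightarrow> rs.spl \<Phi> \<Delta> u"
proof (induction "card \<Phi>" arbitrary: \<Phi> \<Delta> u rule: less_induct)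
  case less
  interpret R: rs \<Phi> \<Delta> by (rule less.prems(1))
  have IH: "\<And>(\<Phi>' :: 'a set) \<Delta>' u'. card \<Phi>' < card \<Phi> \<Longrightarrow> rs \<Phi>' \<Delta>' \<Longrightarrow> u' \<in> weyl \<Delta>'
        \<Longrightarrow> sep \<Phi>' \<Delta>' (inv_set \<Phi>' \<Delta>' u') \<Longrightarrow> rs.spl \<Phi>' \<Delta>' u'"
    by (rule less.hyps; assumption)
  have u: "u \<in> weyl \<Delta>" using less.prems(2) .
  from less.prems(3) show ?case
  proof (cases rule: sep.cases)
    case (S1 \<alpha>)
    have cond: "R.I u \<subseteq> span {} \<or> R.P - span {} \<subseteq> R.I u"
    proof (cases "R.I u = {}")
      case False
      then obtain \<beta> where b: "\<beta> \<in> R.I u" by blast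
      have bP: "\<beta> \<in> R.P" using b R.I_sub by blast
      have "R.P \<subseteq> R.I u"
      proof
        fix \<gamma> assume g: "\<gamma> \<in> R.P"
        have "\<gamma> = \<beta>"
        proof (rule ccontr)
          assume ne: "\<gamma> \<noteq> \<beta>"
          have "\<gamma> \<in> {\<alpha>, -\<alpha>}" "\<beta> \<in> {\<alpha>, -\<alpha>}" using g bP R.pos_sub S1 by auto
          then have "\<gamma> = - \<beta>" using ne by auto
          then show False using R.not_both[OF bP] g by simp
        qed
        then show "\<gamma> \<in> R.I u" using b by simp
      qed
      then show ?thesis by blast
    qed simp
    show ?thesis
    proof (rule R.step[OF _ u cond])
      fix v :: "'a \<Rightarrow> 'a" assume v: "v \<in> weyl {}"
      then have "v = id" using weyl_empty by auto
      moreover have "rs (\<Phi> \<inter> span {}) {}" using R.rs_sub[of "{}"] by simp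
      ultimately show "rs.spl (\<Phi> \<inter> span {}) {} v" using rs.spl_empty by blast
    qed simp
  next
    case S2
    show ?thesis by (rule R.case_S2[OF S2(1) S2(2) u IH]) auto
  next
    case (S3 \<alpha>)
    let ?J = "\<Delta> - {\<alpha>}"
    have J: "?J \<subseteq> \<Delta>" by auto
    have eq: "{\<beta> \<in> R.P. root_le \<Delta> \<alpha> \<beta>} = R.P - span ?J" using R.rootle_eq[OF S3(2)] .
    have cond: "R.I u \<subseteq> span ?J \<or> R.P - span ?J \<subseteq> R.I u"
      using S3(4) R.I_sub unfolding eq by blast
    have aJ: "\<alpha> \<notin> span ?J"
    proof
      assume "\<alpha> \<in> span ?J"
      then have "R.cf \<alpha> \<alpha> = 0" using R.rep_J(2)[OF J] by blast
      then show False using R.cf_basis[OF S3(2)] by simp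
    qed
    have card: "card (\<Phi> \<inter> span ?J) < card \<Phi>"
      using R.fin_Phi S3(2) R.Delta_sub aJ by (intro psubset_card_mono) auto
    show ?thesis
    proof (rule R.step[OF J u cond])
      fix v assume v: "v \<in> weyl ?J" and iv: "inv_set (\<Phi> \<inter> span ?J) ?J v = R.I u \<inter> span ?J"
      show "rs.spl (\<Phi> \<inter> span ?J) ?J v"
        by (rule IH[OF card R.rs_sub[OF J] v]) (use S3(3) iv in simp)
    qed
  qed
qed

theorem theorem4p3:
  fixes \<Phi> \<Delta> :: "'a::euclidean_space set" and u :: "'a \<Rightarrow> 'a"
  assumes "root_system \<Phi>" and "simple_system \<Phi> \<Delta>"
    and "u \<in> weyl \<Delta>" and "separable \<Phi> \<Delta> u"
  shows "splitting \<Delta> (gen_quot \<Delta> {v\<in>weyl \<Delta>. right_le \<Phi> \<Delta> v u})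
                     {v\<in>weyl \<Delta>. right_le \<Phi> \<Delta> v u}"
proof -
  have R: "rs \<Phi> \<Delta>" using assms(1,2) by (simp add: rs_def)
  have "rs.spl \<Phi> \<Delta> u" using main[OF R assms(3)] assms(4) by (simp add: separable_def)
  then show ?thesis using rs.final_link[OF R assms(3)] by simp
qed

end
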